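(* For every $n>3$, the only graph with $n$ vertices that is minor minimal with respect to spherical dimension $n-1$ is $K_{n-3}+\epsilon_3$; that is, $\mathbb{S}_n=\{K_{n-3}+\epsilon_3\}$.
   Context: All graphs are finite and simple; $\epsilon_3$ is the graph with three vertices and no edges, and $G+H$ is obtained from disjoint copies of $G$ and $H$ by adding all edges between them. A minor of $G$ is a graph obtained by a sequence of vertex deletions, edge deletions and edge contractions (discarding loops and multiple edges). A unit-distance embedding of $G$ in $\mathbb{R}^n$ is an injective map $f$ from the vertex set to $\mathbb{R}^n$ with $|f(u)-f(v)|=1$ for every edge $uv$ and no $f(w)$ on the segment $[f(u),f(v)]$ for an edge $uv$ with $w\notin\{u,v\}$. $G$ admits a spherical embedding of dimension $k$ and radius $r$ if $G$ has a unit-distance embedding in $\mathbb{R}^k$ all of whose vertices lie on a sphere $\{x\in\mathbb{R}^k:|x-c|=r\}$. $\operatorname{sdim}G$ is the least $k$ such that $G$ admits a spherical embedding of dimension $k$ and some radius $r<1$. $G$ is minor minimal with respect to spherical dimension $d$ if $\operatorname{sdim}G=d$ and every proper minor of $G$ has spherical dimension less than $d$. $\mathbb{S}_n$ denotes the set of $n$-vertex graphs that are minor minimal with respect to spherical dimension $n-1$. *)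

theory Defs
  imports Complex_Main
begin

definition simple_graph :: "'a set \<Rightarrow> 'a set set \<Rightarrow> bool" where
  "simple_graph V E \<longleftrightarrow> finite V \<and>
     (\<forall>e\<in>E. \<exists>u v. e = {u, v} \<and> u \<noteq> v \<and> u \<in> V \<and> v \<in> V)"

definition graph_iso :: "'a set \<Rightarrow> 'a set set \<Rightarrow> 'b set \<Rightarrow> 'b set set \<Rightarrow> bool" where
  "graph_iso V E V' E' \<longleftrightarrow> (\<exists>\<phi>. bij_betw \<phi> V V' \<and>
     (\<forall>u\<in>V. \<forall>v\<in>V. {u, v} \<in> E \<longleftrightarrow> {\<phi> u, \<phi> v} \<in> E'))"

text \<open>The graph \<open>K_{n-3} + \<epsilon>_3\<close> on vertex set {0..<n}: vertices n-3, n-2, n-1 form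
the independent set \<open>\<epsilon>_3\<close>, all other pairs of distinct vertices are adjacent.\<close>

definition K_plus_eps3_V :: "nat \<Rightarrow> nat set" where
  "K_plus_eps3_V n = {0..<n}"

definition K_plus_eps3_E :: "nat \<Rightarrow> nat set set" where
  "K_plus_eps3_E n = {{i, j} | i j. i < n \<and> j < n \<and> i \<noteq> j \<and> (i < n - 3 \<or> j < n - 3)}"

definition delete_vertex :: "'a \<Rightarrow> 'a set \<times> 'a set set \<Rightarrow> 'a set \<times> 'a set set" where
  "delete_vertex v G = (fst G - {v}, {e \<in> snd G. v \<notin> e})"

definition delete_edge :: "'a set \<Rightarrow> 'a set \<times> 'a set set \<Rightarrow> 'a set \<times> 'a set set" where
  "delete_edge e G = (fst G, snd G - {e})"

text \<open>Contract the edge uv: v is merged into u (loops and multiple edges discarded).\<close>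
definition contract_edge :: "'a \<Rightarrow> 'a \<Rightarrow> 'a set \<times> 'a set set \<Rightarrow> 'a set \<times> 'a set set" where
  "contract_edge u v G = (fst G - {v},
     {e \<in> snd G. v \<notin> e} \<union> {{u, w} | w. {v, w} \<in> snd G \<and> w \<noteq> u})"

inductive minor_step :: "'a set \<times> 'a set set \<Rightarrow> 'a set \<times> 'a set set \<Rightarrow> bool" where
  del_v: "v \<in> fst G \<Longrightarrow> minor_step G (delete_vertex v G)"
| del_e: "e \<in> snd G \<Longrightarrow> minor_step G (delete_edge e G)"
| contr: "{u, v} \<in> snd G \<Longrightarrow> u \<noteq> v \<Longrightarrow> minor_step G (contract_edge u v G)"

definition proper_minor :: "'a set \<times> 'a set set \<Rightarrow> 'a set \<times> 'a set set \<Rightarrow> bool" where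
  "proper_minor H G \<longleftrightarrow> minor_step\<^sup>+\<^sup>+ G H"

text \<open>Points of R^k are represented as functions nat \<Rightarrow> real vanishing from index k on.\<close>

definition in_R :: "nat \<Rightarrow> (nat \<Rightarrow> real) \<Rightarrow> bool" where
  "in_R k x \<longleftrightarrow> (\<forall>i\<ge>k. x i = 0)"

definition distR :: "nat \<Rightarrow> (nat \<Rightarrow> real) \<Rightarrow> (nat \<Rightarrow> real) \<Rightarrow> real" where
  "distR k x y = sqrt (\<Sum>i<k. (x i - y i)\<^sup>2)"

definition unit_distance_embedding ::
    "'a set \<Rightarrow> 'a set set \<Rightarrow> nat \<Rightarrow> ('a \<Rightarrow> nat \<Rightarrow> real) \<Rightarrow> bool" where
  "unit_distance_embedding V E k f \<longleftrightarrow>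
     inj_on f V \<and> (\<forall>v\<in>V. in_R k (f v)) \<and>
     (\<forall>u v. {u, v} \<in> E \<longrightarrow> distR k (f u) (f v) = 1) \<and>
     (\<forall>u v w. {u, v} \<in> E \<longrightarrow> w \<in> V \<longrightarrow> w \<noteq> u \<longrightarrow> w \<noteq> v \<longrightarrow>
        \<not> (\<exists>t::real. 0 \<le> t \<and> t \<le> 1 \<and> f w = (\<lambda>i. (1 - t) * f u i + t * f v i)))"

definition spherical_embedding :: "'a set \<Rightarrow> 'a set set \<Rightarrow> nat \<Rightarrow> real \<Rightarrow> bool" where
  "spherical_embedding V E k r \<longleftrightarrow>
     (\<exists>f c. unit_distance_embedding V E k f \<and> in_R k c \<and>
        (\<forall>v\<in>V. distR k (f v) c = r))"

definition sdim :: "'a set \<Rightarrow> 'a set set \<Rightarrow> nat" where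
  "sdim V E = (LEAST k. \<exists>r<1. spherical_embedding V E k r)"

definition minor_minimal_sdim :: "'a set \<Rightarrow> 'a set set \<Rightarrow> nat \<Rightarrow> bool" where
  "minor_minimal_sdim V E d \<longleftrightarrow> sdim V E = d \<and>
     (\<forall>V' E'. proper_minor (V', E') (V, E) \<longrightarrow> sdim V' E' < d)"

end

theory Submission
  imports Defs "HOL-Library.Function_Algebras"
begin


definition sqd :: "nat \<Rightarrow> (nat \<Rightarrow> real) \<Rightarrow> (nat \<Rightarrow> real) \<Rightarrow> real" where
  "sqd k x y = (\<Sum>i<k. (x i - y i)^2)"

lemma distR_sqd: "distR k x y = sqrt (sqd k x y)"
  by (simp add: distR_def sqd_def)

lemma sqd_nonneg: "sqd k x y \<ge> 0"
  unfolding sqd_def by (intro sum_nonneg) auto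

lemma sqd_zero_eq:
  assumes "in_R k x" "in_R k y" "sqd k x y = 0" shows "x = y"
proof
  fix i
  show "x i = y i"
  proof (cases "i < k")
    case True
    have "\<forall>j\<in>{..<k}. (x j - y j)^2 = 0"
      using assms(3) unfolding sqd_def by (subst sum_nonneg_eq_0_iff[symmetric]) auto
    then show ?thesis using True by auto
  next
    case False then show ?thesis using assms(1,2) by (auto simp: in_R_def)
  qed
qed

lemma chord_lemma:
  assumes "in_R k u" "in_R k v" "in_R k w"
    and "sqd k u c = R" "sqd k v c = R" "sqd k w c = R"
    and "w = (\<lambda>i. (1 - t) * u i + t * v i)" "0 \<le> t" "t \<le> 1"
    and "w \<noteq> u" "w \<noteq> v"
  shows False
proof -
  have pt: "\<And>i. (w i - c i)^2 = (1-t)*(u i - c i)^2 + t*(v i - c i)^2 - t*(1-t)*(u i - v i)^2"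
    using assms(7) by (simp add: power2_eq_square algebra_simps)
  have "sqd k w c = (1-t) * sqd k u c + t * sqd k v c - t*(1-t) * sqd k u v"
    unfolding sqd_def by (simp add: pt sum_subtractf sum_distrib_left sum.distrib)
  then have "t*(1-t) * sqd k u v = 0" using assms(4-6) by (simp add: algebra_simps)
  then consider "t = 0" | "t = 1" | "sqd k u v = 0" by auto
  then show False
  proof cases
    case 1 then have "w = u" using assms(7) by auto
    then show False using assms(10) by simp
  next
    case 2 then have "w = v" using assms(7) by auto
    then show False using assms(11) by simp
  next
    case 3 then have "u = v" using sqd_zero_eq assms(1,2) by blast
    then have "w = u" using assms(7) by (auto simp: algebra_simps)
    then show False using assms(10) by simp
  qed
qed

lemma template_embed:
  fixes P :: "'b \<Rightarrow> nat \<Rightarrow> real"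
  assumes sg: "simple_graph V E" and inj: "inj_on \<phi> V" and injP: "inj_on P (\<phi> ` V)"
    and inR: "\<forall>x\<in>\<phi> ` V. in_R k (P x)" and inc: "in_R k c"
    and sph: "\<forall>x\<in>\<phi> ` V. sqd k (P x) c = R"
    and unit: "\<forall>u\<in>V. \<forall>v\<in>V. u \<noteq> v \<longrightarrow> {u, v} \<in> E \<longrightarrow> sqd k (P (\<phi> u)) (P (\<phi> v)) = 1"
  shows "spherical_embedding V E k (sqrt R)"
proof -
  define f where "f = P \<circ> \<phi>"
  have injf: "inj_on f V" unfolding f_def using inj injP by (simp add: comp_inj_on)
  have edgeV: "u \<in> V \<and> v \<in> V \<and> u \<noteq> v" if "{u, v} \<in> E" for u v
  proof -
    from sg that obtain a b where "{u,v} = {a,b}" "a \<noteq> b" "a \<in> V" "b \<in> V"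
      unfolding simple_graph_def by blast
    then show ?thesis by (auto simp: doubleton_eq_iff)
  qed
  have ude: "unit_distance_embedding V E k f"
    unfolding unit_distance_embedding_def
  proof (intro conjI allI impI)
    show "inj_on f V" by (rule injf)
    show "\<forall>v\<in>V. in_R k (f v)" using inR by (auto simp: f_def)
  next
    fix u v assume e: "{u, v} \<in> E"
    then show "distR k (f u) (f v) = 1" using edgeV[OF e] unit by (auto simp: distR_sqd f_def)
  next
    fix u v w assume e: "{u, v} \<in> E" and w: "w \<in> V" "w \<noteq> u" "w \<noteq> v"
    show "\<not> (\<exists>t::real. 0 \<le> t \<and> t \<le> 1 \<and> f w = (\<lambda>i. (1 - t) * f u i + t * f v i))"
    proof
      assume "\<exists>t::real. 0 \<le> t \<and> t \<le> 1 \<and> f w = (\<lambda>i. (1 - t) * f u i + t * f v i)"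
      then obtain t where t: "0 \<le> t" "t \<le> 1" "f w = (\<lambda>i. (1 - t) * f u i + t * f v i)" by blast
      have uv: "u \<in> V" "v \<in> V" using edgeV[OF e] by auto
      have "f w \<noteq> f u" "f w \<noteq> f v" using injf w uv by (auto dest: inj_onD)
      then show False
        using chord_lemma[of k "f u" "f v" "f w" c R t] t uv w inR sph by (auto simp: f_def)
    qed
  qed
  show ?thesis unfolding spherical_embedding_def
    using ude inc sph by (auto simp: distR_sqd f_def intro!: exI[of _ f] exI[of _ c])
qed

lemma sdim_le:
  assumes "spherical_embedding V E k r" "r < 1"
  shows "sdim V E \<le> k"
  unfolding sdim_def using assms by (intro Least_le) blast




definition hh :: real where "hh = sqrt (1/2)"

lemma hh_sq: "hh^2 = 1/2" by (simp add: hh_def)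
lemma hh_sq': "hh * hh = 1/2" using hh_sq by (simp add: power2_eq_square)

definition eP :: "nat \<times> bool \<Rightarrow> nat \<Rightarrow> real" where
  "eP p = (\<lambda>j. if j = fst p then (if snd p then hh else - hh) else 0)"

lemma sum_two_delta:
  fixes a b :: real and i i' k :: nat
  assumes "i < k" "i' < k" "i \<noteq> i'"
  shows "(\<Sum>j<k. ((if j = i then a else 0) - (if j = i' then b else 0))^2) = a^2 + b^2"
proof -
  have "\<And>j. ((if j = i then a else 0) - (if j = i' then b else 0))^2
      = (if j = i then a^2 else 0) + (if j = i' then b^2 else 0)"
    using assms(3) by auto
  moreover have "(\<Sum>j<k. if j = i then a^2 else 0) = a^2" using assms(1)
    by (subst sum.delta) auto
  moreover have "(\<Sum>j<k. if j = i' then b^2 else 0) = b^2" using assms(2)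
    by (subst sum.delta) auto
  ultimately show ?thesis by (simp add: sum.distrib)
qed

lemma eP_sqd:
  assumes "fst p < k" "fst q < k" "fst p \<noteq> fst q"
  shows "sqd k (eP p) (eP q) = 1"
proof -
  have "sqd k (eP p) (eP q) = (if snd p then hh else -hh)^2 + (if snd q then hh else -hh)^2"
    unfolding sqd_def eP_def using sum_two_delta[OF assms] by simp
  also have "\<dots> = 1" using hh_sq by simp
  finally show ?thesis .
qed

lemma eP_sqd0:
  assumes "fst p < k"
  shows "sqd k (eP p) (\<lambda>_. 0) = 1/2"
proof -
  have "\<And>j. (eP p j - 0)^2 = (if j = fst p then hh^2 else 0)" by (auto simp: eP_def)
  then show ?thesis unfolding sqd_def using assms hh_sq by simp
qed

lemma eP_inR: "fst p < k \<Longrightarrow> in_R k (eP p)"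
  by (auto simp: in_R_def eP_def)

lemma hh_ne: "hh \<noteq> 0" using hh_sq by auto

lemma eP_inj: "inj eP"
proof (rule injI)
  fix p q assume "eP p = eP q"
  then have a: "eP p (fst p) = eP q (fst p)" "eP p (fst q) = eP q (fst q)" by auto
  show "p = q"
  proof (cases "fst p = fst q")
    case True
    then have "snd p = snd q" using a(1) hh_ne by (auto simp: eP_def split: if_splits)
    then show ?thesis using True by (simp add: prod_eq_iff)
  next
    case False then show ?thesis using a(1) hh_ne by (auto simp: eP_def split: if_splits)
  qed
qed

lemma e_template:
  fixes \<phi> :: "'a \<Rightarrow> nat \<times> bool"
  assumes sg: "simple_graph V E" and inj: "inj_on \<phi> V" and rng: "\<forall>v\<in>V. fst (\<phi> v) < k"
    and adj: "\<forall>u\<in>V. \<forall>v\<in>V. u \<noteq> v \<longrightarrow> {u, v} \<in> E \<longrightarrow> fst (\<phi> u) \<noteq> fst (\<phi> v)"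
  shows "sdim V E \<le> k"
proof -
  have "spherical_embedding V E k (sqrt (1/2))"
  proof (rule template_embed[OF sg inj, of eP k "\<lambda>_. 0" "1/2"])
    show "inj_on eP (\<phi> ` V)" using inj_on_subset[OF eP_inj] by blast
    show "\<forall>x\<in>\<phi> ` V. in_R k (eP x)" using eP_inR rng by blast
    show "in_R k (\<lambda>_. 0)" by (simp add: in_R_def)
    show "\<forall>x\<in>\<phi> ` V. sqd k (eP x) (\<lambda>_. 0) = 1 / 2" using eP_sqd0 rng by blast
    show "\<forall>u\<in>V. \<forall>v\<in>V. u \<noteq> v \<longrightarrow> {u, v} \<in> E \<longrightarrow> sqd k (eP (\<phi> u)) (eP (\<phi> v)) = 1"
      using eP_sqd rng adj by blast
  qed
  moreover have "sqrt (1/2::real) < 1" by (simp add: real_sqrt_less_iff)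
  ultimately show ?thesis by (rule sdim_le)
qed

lemma sdim_card_le:
  assumes sg: "simple_graph V E" and "card V \<le> k"
  shows "sdim V E \<le> k"
proof -
  have fin: "finite V" using sg by (simp add: simple_graph_def)
  obtain g where g: "bij_betw g V {0..<card V}" using ex_bij_betw_finite_nat[OF fin] by blast
  show ?thesis
  proof (rule e_template[OF sg, of "\<lambda>v. (g v, True)"])
    show "inj_on (\<lambda>v. (g v, True)) V" using g by (auto simp: bij_betw_def inj_on_def)
    have "\<forall>v\<in>V. g v < card V" using g by (force simp: bij_betw_def)
    then show "\<forall>v\<in>V. fst (g v, True) < k" using assms(2) by auto
    show "\<forall>u\<in>V. \<forall>v\<in>V. u \<noteq> v \<longrightarrow> {u, v} \<in> E \<longrightarrow> fst (g u, True) \<noteq> fst (g v, True)"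
      using g by (auto simp: bij_betw_def inj_on_def)
  qed
qed

lemma sdim_exists:
  assumes sg: "simple_graph V E"
  shows "\<exists>k r. r < 1 \<and> spherical_embedding V E k r"
proof -
  have fin: "finite V" using sg by (simp add: simple_graph_def)
  obtain g where g: "bij_betw g V {0..<card V}" using ex_bij_betw_finite_nat[OF fin] by blast
  have "sdim V E \<le> card V" by (rule sdim_card_le[OF sg]) simp
  have "spherical_embedding V E (card V) (sqrt (1/2))"
  proof (rule template_embed[OF sg, of "\<lambda>v. (g v, True)" eP "card V" "\<lambda>_. 0" "1/2"])
    show "inj_on (\<lambda>v. (g v, True)) V" using g by (auto simp: bij_betw_def inj_on_def)
    have rng: "\<forall>v\<in>V. fst (g v, True) < card V" using g by (force simp: bij_betw_def)
    show "inj_on eP ((\<lambda>v. (g v, True)) ` V)" using inj_on_subset[OF eP_inj] by blast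
    show "\<forall>x\<in>(\<lambda>v. (g v, True)) ` V. in_R (card V) (eP x)" using eP_inR rng by blast
    show "in_R (card V) (\<lambda>_. 0)" by (simp add: in_R_def)
    show "\<forall>x\<in>(\<lambda>v. (g v, True)) ` V. sqd (card V) (eP x) (\<lambda>_. 0) = 1 / 2" using eP_sqd0 rng by blast
    show "\<forall>u\<in>V. \<forall>v\<in>V. u \<noteq> v \<longrightarrow> {u, v} \<in> E \<longrightarrow> sqd (card V) (eP (g u, True)) (eP (g v, True)) = 1"
    proof (intro ballI impI)
      fix u v assume uv: "u \<in> V" "v \<in> V" "u \<noteq> v"
      then have "g u \<noteq> g v" using g by (auto simp: bij_betw_def inj_on_def)
      then show "sqd (card V) (eP (g u, True)) (eP (g v, True)) = 1"
        using eP_sqd[of "(g u, True)" "card V" "(g v, True)"] rng uv by simp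
    qed
  qed
  moreover have "sqrt (1/2::real) < 1" by (simp add: real_sqrt_less_iff)
  ultimately show ?thesis by blast
qed




lemma sum_ind_c:
  fixes c :: real and j m :: nat
  assumes "j < m"
  shows "(\<Sum>i<m. ((if i = j then 1 else 0) + c)^2) = 1 + 2*c + real m * c^2"
proof -
  have "\<And>i. ((if i = j then 1 else 0) + c)^2 = (if i = j then 1 + 2*c else 0) + c^2"
    by (auto simp: power2_eq_square algebra_simps)
  moreover have "(\<Sum>i<m. if i = j then 1 + 2*c else 0) = 1 + 2*c" using assms
    by (subst sum.delta) auto
  ultimately show ?thesis by (simp add: sum.distrib)
qed

locale bconf =
  fixes m :: nat
begin

definition uu :: real where "uu = sqrt (3 / (real m + 3))"
definition bt :: real where "bt = -(uu^2) / (3 * (1 + uu))"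
definition dl :: real where "dl = - uu / 3"
definition a :: real where "a = sqrt (2/3)"
definition b :: real where "b = sqrt (1/2)"

definition pa :: "nat \<Rightarrow> real" where
  "pa j = (if j = m then a else if j = Suc m then -a/2 else if j = Suc (Suc m) then -a/2
           else if j = m + 3 then -a else 0)"
definition pb :: "nat \<Rightarrow> real" where
  "pb j = (if j = Suc m then b else if j = Suc (Suc m) then -b else 0)"

definition Q :: "nat \<Rightarrow> nat \<Rightarrow> real" where
  "Q j = (\<lambda>i. if i < m then (if j < m then (if i = j then 1 else 0) + bt else dl)
              else if i = m then pa j else if i = Suc m then pb j else 0)"

definition P :: "nat \<Rightarrow> nat \<Rightarrow> real" where
  "P j = (\<lambda>i. hh * Q j i)"

lemma u_pos: "uu > 0" by (simp add: uu_def)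
lemma u_sq: "uu^2 = 3 / (real m + 3)" by (simp add: uu_def)
lemma m_eq: "real m = 3 / uu^2 - 3" using u_sq u_pos by (simp add: field_simps)
lemma a_sq: "a^2 = 2/3" by (simp add: a_def)
lemma b_sq: "b^2 = 1/2" by (simp add: b_def)
lemma a_pos: "a > 0" by (simp add: a_def)
lemma b_pos: "b > 0" by (simp add: b_def)

lemma D_eq: "bt - dl = uu / (3 * (1 + uu))"
proof -
  have h: "1 + uu \<noteq> 0" using u_pos by auto
  show ?thesis unfolding bt_def dl_def using h by (simp add: field_simps power2_eq_square)
qed

lemma mD: "real m * (uu / (3 * (1 + uu)))^2 = (1 - uu) / (3 * (1 + uu))"
proof -
  have h: "1 + uu \<noteq> 0" "uu \<noteq> 0" using u_pos by auto
  have "real m * (uu / (3 * (1 + uu)))^2 = (3 - 3*uu^2) / (9 * (1+uu)^2)"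
    unfolding m_eq using h by (simp add: divide_simps) (simp add: algebra_simps power2_eq_square)
  also have "\<dots> = (1 - uu) / (3 * (1 + uu))" using h
    by (simp add: divide_simps) (simp add: algebra_simps power2_eq_square)
  finally show ?thesis .
qed

lemma I1: "1 + 2*(bt - dl) + real m * (bt - dl)^2 + 2/3 = 2"
proof -
  have h: "1 + uu \<noteq> 0" using u_pos by auto
  show ?thesis unfolding D_eq mD using h by (simp add: divide_simps)
qed

lemma mB: "real m * bt^2 = uu^2 * (1 - uu) / (3 * (1 + uu))"
proof -
  have h: "1 + uu \<noteq> 0" "uu \<noteq> 0" using u_pos by auto
  have "real m * bt^2 = (3 - 3*uu^2) * uu^2 / (9 * (1+uu)^2)"
    unfolding m_eq bt_def using h by (simp add: divide_simps) (simp add: algebra_simps power2_eq_square)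
  also have "\<dots> = uu^2 * (1 - uu) / (3 * (1 + uu))" using h
    by (simp add: divide_simps) (simp add: algebra_simps power2_eq_square)
  finally show ?thesis .
qed

lemma I2: "1 + 2*bt + real m * bt^2 = 1 - uu^2/3"
proof -
  have h: "1 + uu \<noteq> 0" using u_pos by auto
  show ?thesis unfolding mB using h unfolding bt_def by (simp add: divide_simps) (simp add: algebra_simps power2_eq_square)
qed

lemma I3: "real m * dl^2 + 2/3 = 1 - uu^2/3"
  using u_pos unfolding m_eq dl_def
  by (simp add: field_simps power2_eq_square)

lemma sqd_split: "sqd (Suc (Suc m)) x y = (\<Sum>i<m. (x i - y i)^2) + (x m - y m)^2 + (x (Suc m) - y (Suc m))^2"
  by (simp add: sqd_def)

lemma pa_low: "j < m \<Longrightarrow> pa j = 0" by (simp add: pa_def)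
lemma pb_low: "j < m \<Longrightarrow> pb j = 0" by (simp add: pb_def)

lemma plane_norm: "m \<le> j \<Longrightarrow> j < m + 4 \<Longrightarrow> (pa j)^2 + (pb j)^2 = 2/3"
proof -
  assume "m \<le> j" "j < m + 4"
  then consider "j = m" | "j = Suc m" | "j = Suc (Suc m)" | "j = m + 3" by linarith
  then show ?thesis using a_sq b_sq
    by cases (simp_all add: pa_def pb_def power_divide)
qed

lemma Q_oo: assumes "j < m" "j' < m" "j \<noteq> j'" shows "sqd (Suc (Suc m)) (Q j) (Q j') = 2"
proof -
  have "(\<Sum>i<m. (Q j i - Q j' i)^2) = (\<Sum>i<m. ((if i = j then 1 else 0) - (if i = j' then 1 else 0))^2)"
    using assms by (intro sum.cong) (auto simp: Q_def)
  also have "\<dots> = 2" using sum_two_delta[of j m j' 1 1] assms by simp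
  finally show ?thesis unfolding sqd_split using assms by (simp add: Q_def pa_low pb_low)
qed

lemma Q_op: assumes "j < m" "m \<le> j'" "j' < m + 4" shows "sqd (Suc (Suc m)) (Q j) (Q j') = 2"
proof -
  have "(\<Sum>i<m. (Q j i - Q j' i)^2) = (\<Sum>i<m. ((if i = j then 1 else 0) + (bt - dl))^2)"
    using assms by (intro sum.cong) (auto simp: Q_def algebra_simps)
  also have "\<dots> = 1 + 2*(bt - dl) + real m * (bt - dl)^2" by (rule sum_ind_c[OF assms(1)])
  finally have s: "(\<Sum>i<m. (Q j i - Q j' i)^2) = 1 + 2*(bt - dl) + real m * (bt - dl)^2" .
  have "(Q j m - Q j' m)^2 + (Q j (Suc m) - Q j' (Suc m))^2 = (pa j')^2 + (pb j')^2"
    using assms by (simp add: Q_def pa_low pb_low)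
  also have "\<dots> = 2/3" by (rule plane_norm[OF assms(2,3)])
  finally show ?thesis unfolding sqd_split using s I1 by linarith
qed

lemma Q_pp: assumes "m \<le> j" "j < m + 3" "m \<le> j'" "j' < m + 3" "j \<noteq> j'"
  shows "sqd (Suc (Suc m)) (Q j) (Q j') = 2"
proof -
  have "(\<Sum>i<m. (Q j i - Q j' i)^2) = 0"
    using assms by (intro sum.neutral) (auto simp: Q_def)
  moreover have "(pa j - pa j')^2 + (pb j - pb j')^2 = 2"
  proof -
    from assms consider "j = m" "j' = Suc m" | "j = m" "j' = Suc (Suc m)" | "j = Suc m" "j' = m"
      | "j = Suc m" "j' = Suc (Suc m)" | "j = Suc (Suc m)" "j' = m" | "j = Suc (Suc m)" "j' = Suc m"
      by linarith
    then show ?thesis using a_sq b_sq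
      by cases (simp_all add: pa_def pb_def power2_eq_square algebra_simps)
  qed
  ultimately show ?thesis unfolding sqd_split using assms by (simp add: Q_def)
qed

lemma Q_center: assumes "j < m + 4" shows "sqd (Suc (Suc m)) (Q j) (\<lambda>_. 0) = 1 - uu^2/3"
proof (cases "j < m")
  case True
  have "(\<Sum>i<m. (Q j i - 0)^2) = (\<Sum>i<m. ((if i = j then 1 else 0) + bt)^2)"
    using True by (intro sum.cong) (auto simp: Q_def)
  also have "\<dots> = 1 + 2*bt + real m * bt^2" by (rule sum_ind_c[OF True])
  finally show ?thesis unfolding sqd_split using True I2 by (simp add: Q_def pa_low pb_low)
next
  case False
  have "(\<Sum>i<m. (Q j i - 0)^2) = (\<Sum>i<m. dl^2)"
    using False by (intro sum.cong) (auto simp: Q_def)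
  also have "\<dots> = real m * dl^2" by simp
  finally have s: "(\<Sum>i<m. (Q j i - 0)^2) = real m * dl^2" .
  have "(Q j m - 0)^2 + (Q j (Suc m) - 0)^2 = 2/3"
    using plane_norm[of j] False assms by (simp add: Q_def)
  then show ?thesis unfolding sqd_split using s I3 by linarith
qed


lemma Q_inR: "in_R (Suc (Suc m)) (P j)"
  by (auto simp: in_R_def P_def Q_def)

lemma Q_inj: assumes "j < m + 4" "j' < m + 4" "Q j = Q j'" shows "j = j'"
proof (rule ccontr)
  assume ne: "j \<noteq> j'"
  have z: "sqd (Suc (Suc m)) (Q j) (Q j') = 0" using assms(3) by (simp add: sqd_def)
  have qm: "Q j m = Q j' m" using assms(3) by simp
  consider "j < m" "j' < m" | "j < m" "m \<le> j'" | "m \<le> j" "j' < m"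
    | "m \<le> j" "m \<le> j'" "j < m + 3" "j' < m + 3" | "j = m + 3" "m \<le> j'" | "j' = m + 3" "m \<le> j"
    using assms by linarith
  then show False
  proof cases
    case 1 then show ?thesis using Q_oo[OF 1 ne] z by simp
  next
    case 2 then show ?thesis using Q_op[OF 2(1,2) assms(2)] z by simp
  next
    case 3 then show ?thesis using Q_op[OF 3(2,1) assms(1)] z by (simp add: sqd_def power2_commute)
  next
    case 4 then show ?thesis using Q_pp[OF 4(1,3,2,4) ne] z by simp
  next
    case 5
    then consider "j' = m" | "j' = Suc m" | "j' = Suc (Suc m)" using ne assms by linarith
    then show ?thesis using qm 5 a_pos by cases (simp_all add: Q_def pa_def)
  next
    case 6
    then consider "j = m" | "j = Suc m" | "j = Suc (Suc m)" using ne assms by linarith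
    then show ?thesis using qm 6 a_pos by cases (simp_all add: Q_def pa_def)
  qed
qed

lemma sqd_scale: "sqd k (\<lambda>i. c * x i) (\<lambda>i. c * y i) = c^2 * sqd k x y"
  unfolding sqd_def by (simp add: sum_distrib_left power2_eq_square algebra_simps)

lemma P_sqd: "sqd k (P j) (P j') = sqd k (Q j) (Q j') / 2"
  unfolding P_def sqd_scale hh_sq by simp

lemma P_center: "sqd k (P j) (\<lambda>_. 0) = sqd k (Q j) (\<lambda>_. 0) / 2"
  using sqd_scale[of k hh "Q j" "\<lambda>_. 0"] unfolding P_def hh_sq by simp

lemma b_template:
  fixes \<phi> :: "'a \<Rightarrow> nat"
  assumes sg: "simple_graph V E" and inj: "inj_on \<phi> V" and rng: "\<forall>v\<in>V. \<phi> v < m + 4"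
    and adj: "\<forall>u\<in>V. \<forall>v\<in>V. u \<noteq> v \<longrightarrow> {u, v} \<in> E \<longrightarrow> \<not> (\<phi> u = m + 3 \<and> m \<le> \<phi> v) \<and> \<not> (\<phi> v = m + 3 \<and> m \<le> \<phi> u)"
  shows "sdim V E \<le> Suc (Suc m)"
proof -
  define R where "R = (1 - uu^2/3) / 2"
  have "spherical_embedding V E (Suc (Suc m)) (sqrt R)"
  proof (rule template_embed[OF sg inj, of P _ "\<lambda>_. 0"])
    show "inj_on P (\<phi> ` V)"
    proof (rule inj_onI)
      fix x y assume xy: "x \<in> \<phi> ` V" "y \<in> \<phi> ` V" "P x = P y"
      have "Q x = Q y"
      proof
        fix i show "Q x i = Q y i" using fun_cong[OF xy(3), of i] hh_ne by (simp add: P_def)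
      qed
      then show "x = y" using Q_inj xy rng by auto
    qed
    show "\<forall>x\<in>\<phi> ` V. in_R (Suc (Suc m)) (P x)" using Q_inR by blast
    show "in_R (Suc (Suc m)) (\<lambda>_. 0)" by (simp add: in_R_def)
    show "\<forall>x\<in>\<phi> ` V. sqd (Suc (Suc m)) (P x) (\<lambda>_. 0) = R"
      using rng Q_center by (auto simp: P_center R_def)
    show "\<forall>u\<in>V. \<forall>v\<in>V. u \<noteq> v \<longrightarrow> {u, v} \<in> E \<longrightarrow> sqd (Suc (Suc m)) (P (\<phi> u)) (P (\<phi> v)) = 1"
    proof (intro ballI impI)
      fix x y assume xy: "x \<in> V" "y \<in> V" "x \<noteq> y" "{x, y} \<in> E"
      define j where "j = \<phi> x"
      define j' where "j' = \<phi> y"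
      have ne: "j \<noteq> j'" using inj xy by (auto simp: j_def j'_def inj_on_def)
      have lt: "j < m + 4" "j' < m + 4" using rng xy by (auto simp: j_def j'_def)
      have nb: "\<not> (j = m + 3 \<and> m \<le> j')" "\<not> (j' = m + 3 \<and> m \<le> j)"
        using adj xy by (auto simp: j_def j'_def)
      have "sqd (Suc (Suc m)) (Q j) (Q j') = 2"
      proof -
        consider "j < m" "j' < m" | "j < m" "m \<le> j'" | "m \<le> j" "j' < m"
          | "m \<le> j" "m \<le> j'" "j < m + 3" "j' < m + 3"
          using lt nb by linarith
        then show ?thesis
        proof cases
          case 1 then show ?thesis using Q_oo[OF 1 ne] by simp
        next
          case 2 then show ?thesis using Q_op[OF 2(1,2) lt(2)] by simp
        next
          case 3 then show ?thesis using Q_op[OF 3(2,1) lt(1)] by (simp add: sqd_def power2_commute)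
        next
          case 4 then show ?thesis using Q_pp[OF 4(1,3,2,4) ne] by simp
        qed
      qed
      then show "sqd (Suc (Suc m)) (P (\<phi> x)) (P (\<phi> y)) = 1"
        by (simp add: P_sqd j_def j'_def)
    qed
  qed
  moreover have "sqrt R < 1"
  proof -
    have "R \<le> 1/2" using u_pos by (simp add: R_def)
    then show ?thesis by (simp add: real_sqrt_less_iff)
  qed
  ultimately show ?thesis by (rule sdim_le)
qed

end



definition sc :: "real \<Rightarrow> (nat \<Rightarrow> real) \<Rightarrow> (nat \<Rightarrow> real)" where
  "sc c x = (\<lambda>i. c * x i)"

lemma sc_apply[simp]: "sc c x i = c * x i" by (simp add: sc_def)

interpretation fvs: vector_space sc
  by unfold_locales (auto simp: sc_def fun_eq_iff algebra_simps)

definition ip :: "nat \<Rightarrow> (nat \<Rightarrow> real) \<Rightarrow> (nat \<Rightarrow> real) \<Rightarrow> real" where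
  "ip k x y = (\<Sum>i<k. x i * y i)"

lemma sum_fun_apply: "(\<Sum>v\<in>A. F v) i = (\<Sum>v\<in>A. F v i)"
proof (cases "finite A")
  case True then show ?thesis by (induction A rule: finite_induct) auto
next
  case False then show ?thesis by simp
qed

lemma ip_sym: "ip k x y = ip k y x" by (simp add: ip_def mult.commute)
lemma ip_sum: "ip k (\<Sum>v\<in>A. F v) y = (\<Sum>v\<in>A. ip k (F v) y)"
  unfolding ip_def sum_fun_apply by (simp add: sum_distrib_right sum.swap[of _ A])
lemma ip_sc: "ip k (sc c x) y = c * ip k x y"
  unfolding ip_def by (simp add: sum_distrib_left algebra_simps)
lemma ip_add: "ip k (x + y) z = ip k x z + ip k y z"
  unfolding ip_def by (simp add: sum.distrib algebra_simps)
lemma ip_diff: "ip k (x - y) z = ip k x z - ip k y z"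
  unfolding ip_def by (simp add: sum_subtractf algebra_simps)
lemma ip_uminus: "ip k (- x) z = - ip k x z"
  unfolding ip_def by (simp add: sum_negf)
lemma ip_zero: "ip k 0 z = 0"
  unfolding ip_def by simp
lemma sqd_ip: "sqd k x y = ip k (x - y) (x - y)"
  unfolding sqd_def ip_def by (simp add: power2_eq_square)

lemma ip_self_zero: assumes "in_R k x" "ip k x x = 0" shows "x = 0"
proof -
  have "sqd k x 0 = 0" using assms(2) by (simp add: sqd_ip)
  then show ?thesis using sqd_zero_eq[OF assms(1)] by (simp add: in_R_def)
qed

definition ee :: "nat \<Rightarrow> nat \<Rightarrow> real" where "ee i = (\<lambda>j. if j = i then 1 else 0)"

lemma inR_span: assumes "in_R k x" shows "x \<in> fvs.span (ee ` {..<k})"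
proof -
  have "x = (\<Sum>i<k. sc (x i) (ee i))"
  proof
    fix j
    show "x j = (\<Sum>i<k. sc (x i) (ee i)) j"
    proof (cases "j < k")
      case True
      have "(\<Sum>i<k. x i * (if j = i then 1 else 0)) = (\<Sum>i<k. if i = j then x i else 0)"
        by (intro sum.cong) auto
      also have "\<dots> = x j" using True by (subst sum.delta) auto
      finally show ?thesis by (simp add: sum_fun_apply ee_def)
    next
      case False then show ?thesis using assms by (simp add: sum_fun_apply ee_def in_R_def)
    qed
  qed
  also have "\<dots> \<in> fvs.span (ee ` {..<k})"
    by (intro fvs.span_sum fvs.span_scale fvs.span_base) auto
  finally show ?thesis .
qed

lemma card_ee: "card (ee ` {..<k}) = k"
proof -
  have "inj ee"
  proof (rule injI)
    fix i j assume "ee i = ee j" then have "ee i i = ee j i" by simp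
    then show "i = j" by (simp add: ee_def split: if_splits)
  qed
  then show ?thesis by (simp add: card_image inj_on_subset)
qed

lemma line_sphere:
  assumes "in_R k u" "in_R k v" "in_R k w"
    and "sqd k u c = R" "sqd k v c = R" "sqd k w c = R"
    and "w = (\<lambda>i. (1 - t) * u i + t * v i)"
  shows "w = u \<or> w = v"
proof -
  have pt: "\<And>i. (w i - c i)^2 = (1-t)*(u i - c i)^2 + t*(v i - c i)^2 - t*(1-t)*(u i - v i)^2"
    using assms(7) by (simp add: power2_eq_square algebra_simps)
  have "sqd k w c = (1-t) * sqd k u c + t * sqd k v c - t*(1-t) * sqd k u v"
    unfolding sqd_def by (simp add: pt sum_subtractf sum_distrib_left sum.distrib)
  then have "t*(1-t) * sqd k u v = 0" using assms(4-6) by (simp add: algebra_simps)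
  then consider "t = 0" | "t = 1" | "sqd k u v = 0" by auto
  then show ?thesis
  proof cases
    case 1 then show ?thesis using assms(7) by auto
  next
    case 2 then show ?thesis using assms(7) by auto
  next
    case 3 then have "u = v" using sqd_zero_eq assms(1,2) by blast
    then show ?thesis using assms(7) by (auto simp: algebra_simps)
  qed
qed




lemma inR_diff: "in_R k x \<Longrightarrow> in_R k y \<Longrightarrow> in_R k (x - y)" by (simp add: in_R_def)
lemma inR_add: "in_R k x \<Longrightarrow> in_R k y \<Longrightarrow> in_R k (x + y)" by (simp add: in_R_def)
lemma inR_sc: "in_R k x \<Longrightarrow> in_R k (sc a x)" by (simp add: in_R_def)
lemma inR_sum: "(\<And>v. v \<in> A \<Longrightarrow> in_R k (F v)) \<Longrightarrow> in_R k (\<Sum>v\<in>A. F v)"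
  by (simp add: in_R_def sum_fun_apply)

lemma ip_expand: "ip k (x - y) (x - y) = ip k x x - 2 * ip k x y + ip k y y"
proof -
  have "\<And>i. (x - y) i * (x - y) i = x i * x i - 2 * (x i * y i) + y i * y i"
    by (simp add: algebra_simps)
  then show ?thesis unfolding ip_def by (simp add: sum.distrib sum_subtractf sum_distrib_left)
qed

lemma ip_sum2: "ip k y (\<Sum>v\<in>A. F v) = (\<Sum>v\<in>A. ip k y (F v))"
  using ip_sum[of k F A y] ip_sym by (metis (no_types, lifting) sum.cong)

lemma ip_sc2: "ip k y (sc c x) = c * ip k y x"
  unfolding ip_def by (simp add: sum_distrib_left algebra_simps)

lemma ip_diff2: "ip k z (x - y) = ip k z x - ip k z y"
  using ip_diff[of k x y z] ip_sym by metis

lemma lower_bound: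
  fixes V :: "'a set"
  assumes sg: "simple_graph V E" and cV: "card V = n" and n3: "n > 3"
    and QV: "Q \<subseteq> V" and cQ: "card Q = 3"
    and full: "\<forall>u\<in>V. \<forall>v\<in>V. u \<noteq> v \<longrightarrow> \<not> (u \<in> Q \<and> v \<in> Q) \<longrightarrow> {u, v} \<in> E"
    and emb: "spherical_embedding V E k r" and kle: "k \<le> n - 2"
  shows False
proof -
  obtain f c where ude: "unit_distance_embedding V E k f" and inc: "in_R k c"
    and sph: "\<forall>v\<in>V. distR k (f v) c = r"
    using emb unfolding spherical_embedding_def by blast
  have injf: "inj_on f V" and inR: "\<forall>v\<in>V. in_R k (f v)"
    and unit: "\<forall>u v. {u, v} \<in> E \<longrightarrow> distR k (f u) (f v) = 1"
    using ude unfolding unit_distance_embedding_def by auto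
  have finV: "finite V" using sg by (simp add: simple_graph_def)
  obtain q1 q2 q3 where Qe: "Q = {q1, q2, q3}" and qd: "q1 \<noteq> q2" "q2 \<noteq> q3" "q1 \<noteq> q3"
    using cQ card_3_iff by metis
  have qV: "q1 \<in> V" "q2 \<in> V" "q3 \<in> V" using QV Qe by auto
  define C where "C = V - Q"
  define m where "m = card C"
  have finC: "finite C" using finV by (simp add: C_def)
  have m_eq: "m = n - 3" unfolding m_def C_def using card_Diff_subset[OF _ QV] cQ cV finV
    by (metis finite_subset QV)
  have m_pos: "m \<ge> 1" using m_eq n3 by simp
  have CV: "C \<subseteq> V" by (auto simp: C_def)
  have CQ: "p \<notin> Q" if "p \<in> C" for p using that by (auto simp: C_def)
  define X where "X v = f v - c" for v
  have inX: "in_R k (X v)" if "v \<in> V" for v using inR that inc by (simp add: X_def inR_diff)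
  have sqdr: "sqd k (f v) c = r^2" if "v \<in> V" for v
  proof -
    have "sqrt (sqd k (f v) c) = r" using sph that by (simp add: distR_sqd)
    then show ?thesis using sqd_nonneg[of k "f v" c] by auto
  qed
  have nX: "ip k (X v) (X v) = r^2" if "v \<in> V" for v
    using sqdr[OF that] by (simp add: X_def sqd_ip)
  define g where "g = r^2 - 1/2"
  have gX: "ip k (X u) (X v) = g" if "u \<in> V" "v \<in> V" "u \<noteq> v" "{u, v} \<in> E" for u v
  proof -
    have "sqd k (f u) (f v) = 1"
      using unit that(4) sqd_nonneg[of k "f u" "f v"] by (simp add: distR_sqd)
    moreover have "f u - f v = X u - X v" by (simp add: X_def)
    ultimately have "ip k (X u - X v) (X u - X v) = 1" by (simp add: sqd_ip)
    then show ?thesis using nX[OF that(1)] nX[OF that(2)] ip_sym[of k "X u" "X v"]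
      by (simp add: ip_expand g_def)
  qed
  have gC: "ip k (X p) (X v) = g" if "p \<in> C" "v \<in> V" "p \<noteq> v" for p v
    using gX[of p v] that full CV CQ by blast
  have injX: "inj_on X V"
  proof (rule inj_onI)
    fix x y assume "x \<in> V" "y \<in> V" "X x = X y"
    then have "f x = f y" by (simp add: X_def fun_eq_iff)
    then show "x = y" using injf \<open>x \<in> V\<close> \<open>y \<in> V\<close> by (auto dest: inj_onD)
  qed
  define d1 where "d1 = X q1 - X q2"
  define d2 where "d2 = X q1 - X q3"
  have ortho1: "ip k (X p) d1 = 0" if "p \<in> C" for p
    unfolding d1_def ip_diff2 using gC[OF that qV(1)] gC[OF that qV(2)] that CQ Qe by auto
  have ortho2: "ip k (X p) d2 = 0" if "p \<in> C" for p
    unfolding d2_def ip_diff2 using gC[OF that qV(1)] gC[OF that qV(3)] that CQ Qe by auto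
  have r_ne: "r^2 \<noteq> 0"
  proof
    assume "r^2 = 0"
    then have "X q1 = 0" "X q2 = 0" using nX qV ip_self_zero inX by auto
    then show False using inj_onD[OF injX, of q1 q2] qV qd by simp
  qed
  have half: "r^2 - g = 1/2" by (simp add: g_def)
  have sumC: "(\<Sum>p'\<in>C. ip k (X p) (X p') * F p') = F p * r^2 + g * (\<Sum>p'\<in>C - {p}. F p')"
    if "p \<in> C" for p and F :: "'a \<Rightarrow> real"
  proof -
    have "(\<Sum>p'\<in>C. ip k (X p) (X p') * F p') = ip k (X p) (X p) * F p + (\<Sum>p'\<in>C - {p}. ip k (X p) (X p') * F p')"
      using that finC by (simp add: sum.remove)
    also have "(\<Sum>p'\<in>C - {p}. ip k (X p) (X p') * F p') = (\<Sum>p'\<in>C - {p}. g * F p')"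
      using gC that CV by (intro sum.cong) auto
    finally show ?thesis using nX that CV by (auto simp: sum_distrib_left)
  qed
  have sigma: "1 + 2 * g * real m \<noteq> 0"
  proof
    assume s0: "1 + 2 * g * real m = 0"
    define U where "U = (\<Sum>p\<in>C. X p)"
    have "ip k U U = (\<Sum>p\<in>C. \<Sum>p'\<in>C. ip k (X p) (X p'))"
      unfolding U_def ip_sum ip_sum2 by (simp add: ip_sym)
    also have "\<dots> = (\<Sum>p\<in>C. r^2 + g * (real m - 1))"
    proof (intro sum.cong refl)
      fix p assume p: "p \<in> C"
      have "(\<Sum>p'\<in>C. ip k (X p) (X p')) = (\<Sum>p'\<in>C. ip k (X p) (X p') * (\<lambda>_. 1) p')" by simp
      also have "\<dots> = r^2 + g * real (card (C - {p}))" using sumC[OF p, of "\<lambda>_. 1"] by simp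
      also have "real (card (C - {p})) = real m - 1" using p finC m_pos by (simp add: m_def of_nat_diff)
      finally show "(\<Sum>p'\<in>C. ip k (X p) (X p')) = r^2 + g * (real m - 1)" .
    qed
    also have "\<dots> = real m * (r^2 + g * (real m - 1))" by (simp add: m_def)
    also have "\<dots> = real m * (1 + 2 * g * real m) / 2" using half by (simp add: algebra_simps)
    finally have "ip k U U = 0" using s0 by simp
    moreover have "in_R k U" unfolding U_def using inX CV by (intro inR_sum) auto
    ultimately have U0: "U = 0" using ip_self_zero by blast
    have "ip k U (X q1) = (\<Sum>p\<in>C. ip k (X p) (X q1))" unfolding U_def by (simp add: ip_sum)
    also have "\<dots> = (\<Sum>p\<in>C. g)" using gC qV CQ Qe by (intro sum.cong) auto
    finally have "real m * g = 0" using U0 by (simp add: ip_zero m_def)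
    then show False using s0 by (cases "g = 0") auto
  qed
  have injXC: "inj_on X C" using inj_on_subset[OF injX CV] .
  have d1nC: "d1 \<notin> X ` C"
  proof
    assume "d1 \<in> X ` C"
    then obtain p where p: "p \<in> C" "d1 = X p" by blast
    then have "ip k (X p) (X p) = 0" using ortho1[OF p(1)] by simp
    then show False using nX p CV r_ne by auto
  qed
  have d2nC: "d2 \<notin> X ` C"
  proof
    assume "d2 \<in> X ` C"
    then obtain p where p: "p \<in> C" "d2 = X p" by blast
    then have "ip k (X p) (X p) = 0" using ortho2[OF p(1)] by simp
    then show False using nX p CV r_ne by auto
  qed
  have d12: "d1 \<noteq> d2"
  proof
    assume "d1 = d2"
    then have "X q2 = X q3" by (simp add: d1_def d2_def)
    then show False using inj_onD[OF injX, of q2 q3] qV qd by simp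
  qed
  have d1f: "d1 i = f q1 i - f q2 i" for i by (simp add: d1_def X_def)
  have d2f: "d2 i = f q1 i - f q3 i" for i by (simp add: d2_def X_def)
  have d1ne: "d1 \<noteq> 0"
  proof
    assume "d1 = 0"
    then have "f q1 = f q2" using d1f by (auto simp: fun_eq_iff)
    then show False using inj_onD[OF injf, of q1 q2] qV qd by simp
  qed
  define S where "S = insert d1 (insert d2 (X ` C))"
  have finS: "finite S" using finC by (simp add: S_def)
  have indep: "\<not> fvs.dependent S"
  proof
    assume "fvs.dependent S"
    then obtain w where w: "\<exists>v\<in>S. w v \<noteq> 0" "(\<Sum>v\<in>S. sc (w v) v) = 0"
      using fvs.dependent_finite[OF finS] by blast
    define A where "A = (\<Sum>v\<in>X ` C. sc (w v) v)"
    define B where "B = sc (w d1) d1 + sc (w d2) d2"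
    have "(\<Sum>v\<in>S. sc (w v) v) = sc (w d1) d1 + (sc (w d2) d2 + A)"
      unfolding S_def A_def using d1nC d2nC d12 finC by (simp add: sum.insert)
    then have AB: "A + B = 0" using w(2) by (simp add: B_def algebra_simps)
    have ipA1: "ip k A d1 = 0" unfolding A_def ip_sum ip_sc using ortho1
      by (intro sum.neutral) auto
    have ipA2: "ip k A d2 = 0" unfolding A_def ip_sum ip_sc using ortho2
      by (intro sum.neutral) auto
    have "ip k B A = 0" unfolding B_def ip_add ip_sc using ipA1 ipA2 ip_sym[of k d1 A] ip_sym[of k d2 A] by simp
    then have "ip k A A = 0" using ip_add[of k A B A] AB by (simp add: ip_zero)
    moreover have "in_R k A" unfolding A_def using inX CV
      by (intro inR_sum inR_sc) auto
    ultimately have A0: "A = 0" using ip_self_zero by blast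
    then have B0: "B = 0" using AB by simp
    have pw: "w d1 * d1 i + w d2 * d2 i = 0" for i using fun_cong[OF B0, of i] by (simp add: B_def)
    have w2: "w d2 = 0"
    proof (rule ccontr)
      assume ne: "w d2 \<noteq> 0"
      define mu where "mu = - w d1 / w d2"
      have "f q3 = (\<lambda>i. (1 - mu) * f q1 i + mu * f q2 i)"
      proof
        fix i
        have "d2 i = mu * d1 i" using pw[of i] ne by (simp add: mu_def field_simps)
        then show "f q3 i = (1 - mu) * f q1 i + mu * f q2 i" by (simp add: d1f d2f algebra_simps)
      qed
      note eq = this
      have "f q3 = f q1 \<or> f q3 = f q2"
        using line_sphere[OF _ _ _ sqdr[OF qV(1)] sqdr[OF qV(2)] sqdr[OF qV(3)] eq] inR qV by blast
      then show False using inj_onD[OF injf, of q3 q1] inj_onD[OF injf, of q3 q2] qV qd by auto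
    qed
    have w1: "w d1 = 0"
    proof (rule ccontr)
      assume ne: "w d1 \<noteq> 0"
      have "d1 = 0" using pw w2 ne by (auto simp: fun_eq_iff)
      then show False using d1ne by simp
    qed
    define W where "W = (\<Sum>p\<in>C. w (X p))"
    have coef: "w (X p) / 2 + g * W = 0" if p: "p \<in> C" for p
    proof -
      have "0 = ip k (X p) A" using A0 by (simp add: ip_sym ip_zero)
      also have "\<dots> = (\<Sum>v\<in>X ` C. ip k (X p) v * w v)"
        unfolding A_def ip_sum2 by (intro sum.cong) (auto simp: ip_sc2)
      also have "\<dots> = (\<Sum>p'\<in>C. ip k (X p) (X p') * w (X p'))"
        using injXC by (simp add: sum.reindex)
      also have "\<dots> = w (X p) * r^2 + g * (\<Sum>p'\<in>C - {p}. w (X p'))"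
        using sumC[OF p, of "\<lambda>p'. w (X p')"] by simp
      also have "(\<Sum>p'\<in>C - {p}. w (X p')) = W - w (X p)"
        unfolding W_def using p finC by (simp add: sum_diff1)
      finally have "0 = w (X p) * (r^2 - g) + g * W" by (simp add: algebra_simps)
      then show ?thesis using half by simp
    qed
    have "W / 2 + g * real m * W = (\<Sum>p\<in>C. w (X p) / 2 + g * W)"
      by (simp add: W_def sum.distrib sum_divide_distrib m_def)
    also have "\<dots> = 0" using coef by simp
    finally have "W * (1 + 2 * g * real m) = 0" by (simp add: algebra_simps)
    then have W0: "W = 0" using sigma by simp
    have "w (X p) = 0" if "p \<in> C" for p using coef[OF that] W0 by simp
    then show False using w(1) w1 w2 by (auto simp: S_def)
  qed
  have Ssub: "S \<subseteq> fvs.span (ee ` {..<k})"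
  proof
    fix x assume "x \<in> S"
    then have "in_R k x" using inX qV CV by (auto simp: S_def d1_def d2_def intro!: inR_diff)
    then show "x \<in> fvs.span (ee ` {..<k})" by (rule inR_span)
  qed
  have "card S \<le> k"
    using fvs.independent_span_bound[OF _ indep Ssub] card_ee by simp
  moreover have "card S = m + 2"
    using d1nC d2nC d12 finC injXC by (simp add: S_def card_image m_def)
  ultimately show False using kle m_eq n3 by simp
qed




definition mprop :: "'a set \<times> 'a set set \<Rightarrow> 'a set \<times> 'a set set \<Rightarrow> bool" where
  "mprop G H \<longleftrightarrow> simple_graph (fst H) (snd H) \<and>
     (card (fst H) < card (fst G) \<or> (fst H = fst G \<and> snd H \<subset> snd G))"

lemma step_mprop:
  assumes "minor_step G H" "simple_graph (fst G) (snd G)"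
  shows "mprop G H"
  using assms
proof (induction rule: minor_step.induct)
  case (del_v v G)
  have fin: "finite (fst G)" using del_v.prems by (simp add: simple_graph_def)
  have "card (fst G - {v}) < card (fst G)" by (rule card_Diff1_less[OF fin del_v.hyps])
  moreover have "simple_graph (fst G - {v}) {e \<in> snd G. v \<notin> e}"
    unfolding simple_graph_def
  proof (intro conjI ballI)
    show "finite (fst G - {v})" using fin by simp
  next
    fix e assume e: "e \<in> {e \<in> snd G. v \<notin> e}"
    then obtain x y where "e = {x, y}" "x \<noteq> y" "x \<in> fst G" "y \<in> fst G"
      using del_v.prems unfolding simple_graph_def by blast
    then show "\<exists>x y. e = {x, y} \<and> x \<noteq> y \<and> x \<in> fst G - {v} \<and> y \<in> fst G - {v}"
      using e by auto
  qed
  ultimately show ?case by (simp add: mprop_def delete_vertex_def)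
next
  case (del_e e G)
  have "simple_graph (fst G) (snd G - {e})"
    using del_e.prems unfolding simple_graph_def by blast
  then show ?case using del_e.hyps by (auto simp: mprop_def delete_edge_def)
next
  case (contr u v G)
  have fin: "finite (fst G)" using contr.prems by (simp add: simple_graph_def)
  have uvV: "u \<in> fst G" "v \<in> fst G"
    using contr.prems contr.hyps unfolding simple_graph_def by (auto simp: doubleton_eq_iff)
  have "card (fst G - {v}) < card (fst G)" by (rule card_Diff1_less[OF fin uvV(2)])
  moreover have "simple_graph (fst G - {v}) ({e \<in> snd G. v \<notin> e} \<union> {{u, w} | w. {v, w} \<in> snd G \<and> w \<noteq> u})"
    unfolding simple_graph_def
  proof (intro conjI ballI)
    show "finite (fst G - {v})" using fin by simp
  next
    fix e assume e: "e \<in> {e \<in> snd G. v \<notin> e} \<union> {{u, w} | w. {v, w} \<in> snd G \<and> w \<noteq> u}"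
    show "\<exists>x y. e = {x, y} \<and> x \<noteq> y \<and> x \<in> fst G - {v} \<and> y \<in> fst G - {v}"
    proof (cases "e \<in> snd G \<and> v \<notin> e")
      case True
      then obtain x y where "e = {x, y}" "x \<noteq> y" "x \<in> fst G" "y \<in> fst G"
        using contr.prems unfolding simple_graph_def by blast
      then show ?thesis using True by auto
    next
      case False
      then obtain w where w: "e = {u, w}" "{v, w} \<in> snd G" "w \<noteq> u" using e by blast
      have "w \<in> fst G" "w \<noteq> v" using w(2) contr.prems unfolding simple_graph_def
        by (auto simp: doubleton_eq_iff)
      then show ?thesis using w uvV contr.hyps(2) by blast
    qed
  qed
  ultimately show ?case by (simp add: mprop_def contract_edge_def)
qed

lemma proper_minor_props:
  assumes "proper_minor H G" "simple_graph (fst G) (snd G)"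
  shows "mprop G H"
proof -
  have "minor_step\<^sup>+\<^sup>+ G H" using assms(1) by (simp add: proper_minor_def)
  then show ?thesis
  proof (induction rule: tranclp_induct)
    case (base y) show ?case by (rule step_mprop[OF base assms(2)])
  next
    case (step y z)
    have s: "mprop y z" using step_mprop[OF step.hyps(2)] step.IH by (simp add: mprop_def)
    have sz: "simple_graph (fst z) (snd z)" using s by (simp add: mprop_def)
    have A: "card (fst z) < card (fst y) \<or> (fst z = fst y \<and> snd z \<subset> snd y)"
      using s by (simp add: mprop_def)
    have B: "card (fst y) < card (fst G) \<or> (fst y = fst G \<and> snd y \<subset> snd G)"
      using step.IH by (simp add: mprop_def)
    have "card (fst z) < card (fst G) \<or> (fst z = fst G \<and> snd z \<subset> snd G)"
    proof (cases "card (fst z) < card (fst y)")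
      case True
      then show ?thesis using B by auto
    next
      case False
      then have "fst z = fst y" "snd z \<subset> snd y" using A by auto
      then show ?thesis using B by auto
    qed
    then show ?case using sz by (simp add: mprop_def)
  qed
qed

lemma edge_del_minor:
  assumes "finite D" "D \<noteq> {}" "D \<subseteq> E"
  shows "minor_step\<^sup>+\<^sup>+ (V, E) (V, E - D)"
  using assms
proof (induction D rule: finite_ne_induct)
  case (singleton x)
  have xE: "x \<in> snd (V, E)" using singleton by simp
  have "minor_step (V, E) (delete_edge x (V, E))" by (rule minor_step.del_e[OF xE])
  then have "minor_step (V, E) (V, E - {x})" by (simp add: delete_edge_def)
  then show ?case by (rule tranclp.r_into_trancl)
next
  case (insert x D)
  have xE: "x \<in> snd (V, E - D)" using insert.prems insert.hyps by simp
  have "minor_step (V, E - D) (delete_edge x (V, E - D))" by (rule minor_step.del_e[OF xE])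
  moreover have "delete_edge x (V, E - D) = (V, E - insert x D)" by (auto simp: delete_edge_def)
  ultimately have st: "minor_step (V, E - D) (V, E - insert x D)" by simp
  have "minor_step\<^sup>+\<^sup>+ (V, E) (V, E - D)" using insert.IH insert.prems by simp
  then show ?case using st by (rule tranclp.trancl_into_trancl)
qed

lemma sub_proper_minor:
  assumes "finite E" "E' \<subset> E"
  shows "proper_minor (V, E') (V, E)"
proof -
  have "minor_step\<^sup>+\<^sup>+ (V, E) (V, E - (E - E'))"
    using assms by (intro edge_del_minor) auto
  moreover have "E - (E - E') = E'" using assms by auto
  ultimately show ?thesis by (simp add: proper_minor_def)
qed




lemma caseA:
  assumes sg: "simple_graph V E" and cV: "card V = n" and n3: "n > 3"
    and inV: "a1 \<in> V" "b1 \<in> V" "a2 \<in> V" "b2 \<in> V"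
    and dist: "a1 \<noteq> b1" "a1 \<noteq> a2" "a1 \<noteq> b2" "b1 \<noteq> a2" "b1 \<noteq> b2" "a2 \<noteq> b2"
    and ne1: "{a1, b1} \<notin> E" and ne2: "{a2, b2} \<notin> E"
  shows "sdim V E \<le> n - 2"
proof -
  have finV: "finite V" using sg by (simp add: simple_graph_def)
  define R where "R = V - {a1, b1, a2, b2}"
  have cR: "card R = n - 4" using cV inV dist finV unfolding R_def
    by (subst card_Diff_subset) (auto simp: card_insert_if)
  obtain h where h: "bij_betw h R {0..<card R}" using ex_bij_betw_finite_nat[of R] finV R_def by auto
  have hlt: "h v < n - 4" if "v \<in> R" for v using h that cR by (force simp: bij_betw_def)
  have hinj: "h u = h v \<Longrightarrow> u \<in> R \<Longrightarrow> v \<in> R \<Longrightarrow> u = v" for u v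
    using h by (auto simp: bij_betw_def inj_on_def)
  define \<phi> where "\<phi> v = (if v = a1 then (0::nat, True) else if v = b1 then (0, False)
      else if v = a2 then (1, True) else if v = b2 then (1, False) else (h v + 2, True))" for v
  have R_iff: "v \<in> R \<longleftrightarrow> v \<in> V \<and> v \<noteq> a1 \<and> v \<noteq> b1 \<and> v \<noteq> a2 \<and> v \<noteq> b2" for v
    by (auto simp: R_def)
  have f0: "fst (\<phi> v) = 0 \<longleftrightarrow> v = a1 \<or> v = b1" for v using dist by (auto simp: \<phi>_def)
  have f1: "fst (\<phi> v) = 1 \<longleftrightarrow> v = a2 \<or> v = b2" for v using dist by (auto simp: \<phi>_def)
  have fR: "v \<in> R \<Longrightarrow> \<phi> v = (h v + 2, True)" for v by (auto simp: \<phi>_def R_iff)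
  have split: "v \<in> R \<or> v = a1 \<or> v = b1 \<or> v = a2 \<or> v = b2" if "v \<in> V" for v
    using that by (auto simp: R_iff)
  have vals: "\<phi> a1 = (0, True)" "\<phi> b1 = (0, False)" "\<phi> a2 = (1, True)" "\<phi> b2 = (1, False)"
    using dist by (simp_all add: \<phi>_def)
  have fR2: "v \<in> R \<Longrightarrow> fst (\<phi> v) \<ge> 2" for v using fR by simp
  show ?thesis
  proof (rule e_template[OF sg, of \<phi>])
    show "inj_on \<phi> V"
    proof (rule inj_onI)
      fix u v assume uv: "u \<in> V" "v \<in> V" "\<phi> u = \<phi> v"
      have Ru: "u \<in> R \<Longrightarrow> v \<in> R \<Longrightarrow> u = v" using uv(3) fR hinj by (metis fst_conv add_right_cancel)
      show "u = v"
        using split[OF uv(1)] split[OF uv(2)] uv(3) Ru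
        by (elim disjE) (simp_all add: vals fR)
    qed
    show "\<forall>v\<in>V. fst (\<phi> v) < n - 2"
    proof
      fix v assume "v \<in> V"
      show "fst (\<phi> v) < n - 2"
      proof (cases "v \<in> R")
        case True then show ?thesis using hlt[OF True] fR[OF True] n3 by simp
      next
        case False then show ?thesis using \<open>v \<in> V\<close> n3 unfolding R_iff by (auto simp: \<phi>_def)
      qed
    qed
    show "\<forall>u\<in>V. \<forall>v\<in>V. u \<noteq> v \<longrightarrow> {u, v} \<in> E \<longrightarrow> fst (\<phi> u) \<noteq> fst (\<phi> v)"
    proof (intro ballI impI notI)
      fix u v assume uv: "u \<in> V" "v \<in> V" "u \<noteq> v" "{u, v} \<in> E" "fst (\<phi> u) = fst (\<phi> v)"
      have Ru: "u \<in> R \<Longrightarrow> v \<in> R \<Longrightarrow> u = v" using uv(5) fR hinj by (metis fst_conv add_right_cancel)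
      have ne1': "{b1, a1} \<notin> E" "{b2, a2} \<notin> E" using ne1 ne2 by (simp_all add: insert_commute)
      show False
        using split[OF uv(1)] split[OF uv(2)] uv(3,4,5) Ru ne1 ne2 ne1' fR2[of u] fR2[of v]
        by (elim disjE) (simp_all add: vals)
    qed
  qed
qed

lemma caseB:
  assumes sg: "simple_graph V E" and cV: "card V = n" and n3: "n > 3"
    and inV: "s \<in> V" "x \<in> V" "y \<in> V" "z \<in> V"
    and dist: "s \<noteq> x" "s \<noteq> y" "s \<noteq> z" "x \<noteq> y" "x \<noteq> z" "y \<noteq> z"
    and ne: "{s, x} \<notin> E" "{s, y} \<notin> E" "{s, z} \<notin> E"
  shows "sdim V E \<le> n - 2"
proof -
  define m where "m = n - 4"
  interpret bconf m .
  have finV: "finite V" using sg by (simp add: simple_graph_def)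
  define R where "R = V - {s, x, y, z}"
  have cR: "card R = m" using cV inV dist finV unfolding R_def m_def
    by (subst card_Diff_subset) (auto simp: card_insert_if)
  obtain h where h: "bij_betw h R {0..<card R}" using ex_bij_betw_finite_nat[of R] finV R_def by auto
  have hlt: "h v < m" if "v \<in> R" for v using h that cR by (force simp: bij_betw_def)
  have hinj: "h u = h v \<Longrightarrow> u \<in> R \<Longrightarrow> v \<in> R \<Longrightarrow> u = v" for u v
    using h by (auto simp: bij_betw_def inj_on_def)
  define \<phi> where "\<phi> v = (if v = x then m else if v = y then m + 1 else if v = z then m + 2
      else if v = s then m + 3 else h v)" for v
  have R_iff: "v \<in> R \<longleftrightarrow> v \<in> V \<and> v \<noteq> s \<and> v \<noteq> x \<and> v \<noteq> y \<and> v \<noteq> z" for v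
    by (auto simp: R_def)
  have fR: "v \<in> R \<Longrightarrow> \<phi> v = h v" for v by (auto simp: \<phi>_def R_iff)
  have split: "v \<in> R \<or> v = s \<or> v = x \<or> v = y \<or> v = z" if "v \<in> V" for v
    using that by (auto simp: R_iff)
  have vals: "\<phi> x = m" "\<phi> y = m + 1" "\<phi> z = m + 2" "\<phi> s = m + 3"
    using dist by (simp_all add: \<phi>_def)
  have fR2: "v \<in> R \<Longrightarrow> \<phi> v < m" for v using fR hlt by simp
  have "sdim V E \<le> Suc (Suc m)"
  proof (rule b_template[OF sg, of \<phi>])
    show "inj_on \<phi> V"
    proof (rule inj_onI)
      fix u v assume uv: "u \<in> V" "v \<in> V" "\<phi> u = \<phi> v"
      have Ru: "u = v" if "u \<in> R" "v \<in> R"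
      proof -
        have "h u = h v" using uv(3) fR[OF that(1)] fR[OF that(2)] by simp
        then show ?thesis using hinj that by blast
      qed
      show "u = v"
      proof (cases "u \<in> R \<and> v \<in> R")
        case True then show ?thesis using Ru by blast
      next
        case False
        have A: "u \<in> R \<Longrightarrow> \<phi> u < m" "v \<in> R \<Longrightarrow> \<phi> v < m" using fR2 by auto
        show ?thesis using split[OF uv(1)] split[OF uv(2)] uv(3) A False
          by (elim disjE) (simp_all add: vals)
      qed
    qed
    show "\<forall>v\<in>V. \<phi> v < m + 4"
    proof
      fix v assume "v \<in> V"
      then show "\<phi> v < m + 4" using split[OF \<open>v \<in> V\<close>] fR2[of v] by (elim disjE) (simp_all add: vals)
    qed
    show "\<forall>u\<in>V. \<forall>v\<in>V. u \<noteq> v \<longrightarrow> {u, v} \<in> E \<longrightarrow> \<not> (\<phi> u = m + 3 \<and> m \<le> \<phi> v) \<and> \<not> (\<phi> v = m + 3 \<and> m \<le> \<phi> u)"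
    proof (intro ballI impI)
      fix u v assume uv: "u \<in> V" "v \<in> V" "u \<noteq> v" "{u, v} \<in> E"
      have ne': "{x, s} \<notin> E" "{y, s} \<notin> E" "{z, s} \<notin> E" using ne by (simp_all add: insert_commute)
      show "\<not> (\<phi> u = m + 3 \<and> m \<le> \<phi> v) \<and> \<not> (\<phi> v = m + 3 \<and> m \<le> \<phi> u)"
        using split[OF uv(1)] split[OF uv(2)] uv(3,4) ne ne' fR2[of u] fR2[of v]
        by (elim disjE) (simp_all add: vals)
    qed
  qed
  then show ?thesis using n3 by (simp add: m_def)
qed

lemma small_sdim:
  assumes sg: "simple_graph V E" and cV: "card V \<le> n - 1" and n3: "n > 3"
  shows "sdim V E \<le> n - 2"
proof (cases "card V \<le> n - 2")
  case True then show ?thesis using sdim_card_le[OF sg] by blast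
next
  case False
  define m where "m = n - 4"
  interpret bconf m .
  have finV: "finite V" using sg by (simp add: simple_graph_def)
  have cV': "card V = m + 3" using False cV n3 by (simp add: m_def)
  obtain h where h: "bij_betw h V {0..<card V}" using ex_bij_betw_finite_nat[OF finV] by auto
  have hlt: "h v < m + 3" if "v \<in> V" for v using h that cV' by (force simp: bij_betw_def)
  have "sdim V E \<le> Suc (Suc m)"
  proof (rule b_template[OF sg, of h])
    show "inj_on h V" using h by (simp add: bij_betw_def)
    show "\<forall>v\<in>V. h v < m + 4"
    proof
      fix v assume "v \<in> V" then show "h v < m + 4" using hlt[of v] by simp
    qed
    show "\<forall>u\<in>V. \<forall>v\<in>V. u \<noteq> v \<longrightarrow> {u, v} \<in> E \<longrightarrow> \<not> (h u = m + 3 \<and> m \<le> h v) \<and> \<not> (h v = m + 3 \<and> m \<le> h u)"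
    proof (intro ballI impI)
      fix u v assume "u \<in> V" "v \<in> V"
      then show "\<not> (h u = m + 3 \<and> m \<le> h v) \<and> \<not> (h v = m + 3 \<and> m \<le> h u)"
        using hlt[of u] hlt[of v] by simp
    qed
  qed
  then show ?thesis using n3 by (simp add: m_def)
qed




definition fullQ :: "'a set \<Rightarrow> 'a set set \<Rightarrow> 'a set \<Rightarrow> bool" where
  "fullQ V E Q \<longleftrightarrow> Q \<subseteq> V \<and> card Q = 3 \<and> (\<forall>u\<in>V. \<forall>v\<in>V. u \<noteq> v \<longrightarrow> \<not> (u \<in> Q \<and> v \<in> Q) \<longrightarrow> {u, v} \<in> E)"

definition exactQ :: "'a set \<Rightarrow> 'a set set \<Rightarrow> 'a set \<Rightarrow> bool" where
  "exactQ V E Q \<longleftrightarrow> fullQ V E Q \<and> (\<forall>u v. {u, v} \<in> E \<longrightarrow> \<not> (u \<in> Q \<and> v \<in> Q))"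

lemma sdim_full_ge:
  assumes sg: "simple_graph V E" and cV: "card V = n" and n3: "n > 3" and fq: "fullQ V E Q"
  shows "sdim V E \<ge> n - 1"
proof (rule ccontr)
  assume "\<not> sdim V E \<ge> n - 1"
  then have le: "sdim V E \<le> n - 2" by simp
  have "\<exists>r<1. spherical_embedding V E (sdim V E) r"
    unfolding sdim_def by (rule LeastI_ex) (use sdim_exists[OF sg] in blast)
  then obtain r where "spherical_embedding V E (sdim V E) r" by blast
  then show False using lower_bound[OF sg cV n3, of Q] fq le unfolding fullQ_def by blast
qed

lemma sdim_exact_le:
  assumes sg: "simple_graph V E" and cV: "card V = n" and n3: "n > 3" and eq: "exactQ V E Q"
  shows "sdim V E \<le> n - 1"
proof -
  have QV: "Q \<subseteq> V" and cQ: "card Q = 3" and noQ: "\<forall>u v. {u, v} \<in> E \<longrightarrow> \<not> (u \<in> Q \<and> v \<in> Q)"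
    using eq unfolding exactQ_def fullQ_def by auto
  obtain q1 q2 q3 where Qe: "Q = {q1, q2, q3}" and qd: "q1 \<noteq> q2" "q2 \<noteq> q3" "q1 \<noteq> q3"
    using cQ card_3_iff by metis
  have finV: "finite V" using sg by (simp add: simple_graph_def)
  define R where "R = V - Q"
  have cR: "card R = n - 3" using cV cQ QV finV unfolding R_def
    by (simp add: card_Diff_subset finite_subset)
  obtain h where h: "bij_betw h R {0..<card R}" using ex_bij_betw_finite_nat[of R] finV R_def by auto
  have hlt: "h v < n - 3" if "v \<in> R" for v using h that cR by (force simp: bij_betw_def)
  have hinj: "u = v" if "h u = h v" "u \<in> R" "v \<in> R" for u v
    using h that by (auto simp: bij_betw_def inj_on_def)
  define \<phi> where "\<phi> v = (if v = q1 then (0::nat, True) else if v = q2 then (0, False)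
      else if v = q3 then (1, True) else (h v + 2, True))" for v
  have fR: "v \<in> R \<Longrightarrow> \<phi> v = (h v + 2, True)" for v using Qe by (auto simp: \<phi>_def R_def)
  have split: "v \<in> R \<or> v = q1 \<or> v = q2 \<or> v = q3" if "v \<in> V" for v
    using that Qe by (auto simp: R_def)
  have vals: "\<phi> q1 = (0, True)" "\<phi> q2 = (0, False)" "\<phi> q3 = (1, True)"
    using qd by (simp_all add: \<phi>_def)
  have fR2: "v \<in> R \<Longrightarrow> fst (\<phi> v) \<ge> 2" for v using fR by simp
  show ?thesis
  proof (rule e_template[OF sg, of \<phi>])
    show "inj_on \<phi> V"
    proof (rule inj_onI)
      fix u v assume uv: "u \<in> V" "v \<in> V" "\<phi> u = \<phi> v"
      show "u = v"
      proof (cases "u \<in> R \<and> v \<in> R")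
        case True
        then have "h u = h v" using uv(3) fR by auto
        then show ?thesis using hinj True by blast
      next
        case False
        have A: "u \<in> R \<Longrightarrow> \<phi> u = (h u + 2, True)" "v \<in> R \<Longrightarrow> \<phi> v = (h v + 2, True)" using fR by auto
        show ?thesis using split[OF uv(1)] split[OF uv(2)] uv(3) A False
          by (elim disjE) (simp_all add: vals)
      qed
    qed
    show "\<forall>v\<in>V. fst (\<phi> v) < n - 1"
    proof
      fix v assume v: "v \<in> V"
      show "fst (\<phi> v) < n - 1"
      proof (cases "v \<in> R")
        case True then show ?thesis using hlt[OF True] fR[OF True] n3 by simp
      next
        case False then show ?thesis using split[OF v] n3 by (auto simp: vals)
      qed
    qed
    show "\<forall>u\<in>V. \<forall>v\<in>V. u \<noteq> v \<longrightarrow> {u, v} \<in> E \<longrightarrow> fst (\<phi> u) \<noteq> fst (\<phi> v)"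
    proof (intro ballI impI notI)
      fix u v assume uv: "u \<in> V" "v \<in> V" "u \<noteq> v" "{u, v} \<in> E" "fst (\<phi> u) = fst (\<phi> v)"
      have nq: "\<not> (u \<in> Q \<and> v \<in> Q)" using noQ uv(4) by blast
      show False
      proof (cases "u \<in> R \<and> v \<in> R")
        case True
        then have "h u = h v" using uv(5) fR by auto
        then show False using hinj True uv(3) by blast
      next
        case False
        have A: "u \<in> R \<Longrightarrow> \<phi> u = (h u + 2, True)" "v \<in> R \<Longrightarrow> \<phi> v = (h v + 2, True)" using fR by auto
        show False using split[OF uv(1)] split[OF uv(2)] uv(3,5) A False nq Qe
          by (elim disjE) (simp_all add: vals)
      qed
    qed
  qed
qed

lemma extend3:
  assumes "finite V" "A \<subseteq> V" "card A \<le> 3" "card V \<ge> 3"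
  shows "\<exists>Q. A \<subseteq> Q \<and> Q \<subseteq> V \<and> card Q = 3"
proof -
  have fA: "finite A" using assms(1,2) finite_subset by blast
  have "card (V - A) = card V - card A" using assms(1,2) fA by (simp add: card_Diff_subset)
  then have "3 - card A \<le> card (V - A)" using assms(3,4) by simp
  then obtain T where T: "T \<subseteq> V - A" "card T = 3 - card A" "finite T"
    using obtain_subset_with_card_n by blast
  have "card (A \<union> T) = card A + card T" using T fA by (subst card_Un_disjoint) auto
  then have "card (A \<union> T) = 3" using T assms(3) by simp
  then show ?thesis using T assms(2) by (intro exI[of _ "A \<union> T"]) auto
qed

lemma star_case:
  assumes sg: "simple_graph V E" and cV3: "card V \<ge> 3" and aV: "a \<in> V"
    and allA: "\<forall>u\<in>V. \<forall>v\<in>V. u \<noteq> v \<longrightarrow> {u, v} \<notin> E \<longrightarrow> u = a \<or> v = a"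
    and noB: "\<And>x y z. x \<in> V \<Longrightarrow> y \<in> V \<Longrightarrow> z \<in> V \<Longrightarrow> a \<noteq> x \<Longrightarrow> a \<noteq> y \<Longrightarrow> a \<noteq> z
        \<Longrightarrow> x \<noteq> y \<Longrightarrow> x \<noteq> z \<Longrightarrow> y \<noteq> z \<Longrightarrow> {a, x} \<notin> E \<Longrightarrow> {a, y} \<notin> E \<Longrightarrow> {a, z} \<notin> E \<Longrightarrow> False"
  shows "\<exists>Q. fullQ V E Q"
proof -
  have finV: "finite V" using sg by (simp add: simple_graph_def)
  define N where "N = {v \<in> V. v \<noteq> a \<and> {a, v} \<notin> E}"
  have finN: "finite N" using finV by (simp add: N_def)
  have cN: "card N \<le> 2"
  proof (rule ccontr)
    assume "\<not> card N \<le> 2"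
    then obtain T where T: "T \<subseteq> N" "card T = 3" using obtain_subset_with_card_n[of 3 N] by auto
    then obtain x y z where "T = {x, y, z}" "x \<noteq> y" "y \<noteq> z" "x \<noteq> z" using card_3_iff by metis
    then show False using T(1) noB[of x y z] unfolding N_def by auto
  qed
  have "card (insert a N) \<le> 3" using cN card_insert_le_m1[of 3 N a] finN by (simp add: card_insert_if)
  then obtain Q where Q: "insert a N \<subseteq> Q" "Q \<subseteq> V" "card Q = 3"
    using extend3[OF finV, of "insert a N"] cV3 aV unfolding N_def by auto
  have "fullQ V E Q" unfolding fullQ_def
  proof (intro conjI ballI impI)
    show "Q \<subseteq> V" "card Q = 3" using Q by auto
  next
    fix u v assume uv: "u \<in> V" "v \<in> V" "u \<noteq> v" "\<not> (u \<in> Q \<and> v \<in> Q)"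
    show "{u, v} \<in> E"
    proof (rule ccontr)
      assume ne: "{u, v} \<notin> E"
      then have "u = a \<or> v = a" using allA uv by blast
      then show False
      proof
        assume "u = a" then have "v \<in> N" using uv ne by (auto simp: N_def)
        then show False using Q uv \<open>u = a\<close> by auto
      next
        assume "v = a" then have "u \<in> N" using uv ne by (auto simp: N_def insert_commute)
        then show False using Q uv \<open>v = a\<close> by auto
      qed
    qed
  qed
  then show ?thesis by blast
qed

lemma combin:
  assumes sg: "simple_graph V E" and cV: "card V = n" and n3: "n > 3"
    and noA: "\<And>a1 b1 a2 b2. a1 \<in> V \<Longrightarrow> b1 \<in> V \<Longrightarrow> a2 \<in> V \<Longrightarrow> b2 \<in> V \<Longrightarrow>
        a1 \<noteq> b1 \<Longrightarrow> a1 \<noteq> a2 \<Longrightarrow> a1 \<noteq> b2 \<Longrightarrow> b1 \<noteq> a2 \<Longrightarrow> b1 \<noteq> b2 \<Longrightarrow> a2 \<noteq> b2 \<Longrightarrow>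
        {a1, b1} \<notin> E \<Longrightarrow> {a2, b2} \<notin> E \<Longrightarrow> False"
    and noB: "\<And>s x y z. s \<in> V \<Longrightarrow> x \<in> V \<Longrightarrow> y \<in> V \<Longrightarrow> z \<in> V \<Longrightarrow>
        s \<noteq> x \<Longrightarrow> s \<noteq> y \<Longrightarrow> s \<noteq> z \<Longrightarrow> x \<noteq> y \<Longrightarrow> x \<noteq> z \<Longrightarrow> y \<noteq> z \<Longrightarrow>
        {s, x} \<notin> E \<Longrightarrow> {s, y} \<notin> E \<Longrightarrow> {s, z} \<notin> E \<Longrightarrow> False"
  shows "\<exists>Q. fullQ V E Q"
proof -
  have finV: "finite V" using sg by (simp add: simple_graph_def)
  have cV3: "card V \<ge> 3" using cV n3 by simp
  define NE where "NE u v \<longleftrightarrow> u \<in> V \<and> v \<in> V \<and> u \<noteq> v \<and> {u, v} \<notin> E" for u v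
  have NEsym: "NE u v \<Longrightarrow> NE v u" for u v by (auto simp: NE_def insert_commute)
  have inter: "u = u' \<or> u = v' \<or> v = u' \<or> v = v'" if "NE u v" "NE u' v'" for u v u' v'
    using that noA[of u v u' v'] unfolding NE_def by blast
  show ?thesis
  proof (cases "\<exists>u v. NE u v")
    case False
    obtain Q where Q: "Q \<subseteq> V" "card Q = 3" using obtain_subset_with_card_n[OF cV3] by blast
    have "fullQ V E Q" unfolding fullQ_def using Q False NE_def by blast
    then show ?thesis by blast
  next
    case True
    then obtain a b where ab: "NE a b" by blast
    show ?thesis
    proof (cases "\<forall>u v. NE u v \<longrightarrow> u = a \<or> v = a")
      case True
      show ?thesis
      proof (rule star_case[OF sg cV3, of a])
        show "a \<in> V" using ab by (simp add: NE_def)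
        show "\<forall>u\<in>V. \<forall>v\<in>V. u \<noteq> v \<longrightarrow> {u, v} \<notin> E \<longrightarrow> u = a \<or> v = a"
          using True by (auto simp: NE_def)
      next
        fix x y z assume "x \<in> V" "y \<in> V" "z \<in> V" "a \<noteq> x" "a \<noteq> y" "a \<noteq> z"
          "x \<noteq> y" "x \<noteq> z" "y \<noteq> z" "{a, x} \<notin> E" "{a, y} \<notin> E" "{a, z} \<notin> E"
        then show False using noB[of a x y z] ab by (auto simp: NE_def)
      qed
    next
      case notA: False
      show ?thesis
      proof (cases "\<forall>u v. NE u v \<longrightarrow> u = b \<or> v = b")
        case True
        show ?thesis
        proof (rule star_case[OF sg cV3, of b])
          show "b \<in> V" using ab by (simp add: NE_def)
          show "\<forall>u\<in>V. \<forall>v\<in>V. u \<noteq> v \<longrightarrow> {u, v} \<notin> E \<longrightarrow> u = b \<or> v = b"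
            using True by (auto simp: NE_def)
        next
          fix x y z assume "x \<in> V" "y \<in> V" "z \<in> V" "b \<noteq> x" "b \<noteq> y" "b \<noteq> z"
            "x \<noteq> y" "x \<noteq> z" "y \<noteq> z" "{b, x} \<notin> E" "{b, y} \<notin> E" "{b, z} \<notin> E"
          then show False using noB[of b x y z] ab by (auto simp: NE_def)
        qed
      next
        case notB: False
        obtain c1 c2 where c: "NE c1 c2" "c1 \<noteq> a" "c2 \<noteq> a" using notA by blast
        obtain d1 d2 where d: "NE d1 d2" "d1 \<noteq> b" "d2 \<noteq> b" using notB by blast
        obtain c where c': "NE b c" "c \<noteq> a"
        proof -
          have "b = c1 \<or> b = c2" using inter[OF ab c(1)] c by auto
          then show thesis
          proof
            assume "b = c1" then show thesis using that c by auto
          next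
            assume "b = c2" then show thesis using that c NEsym by auto
          qed
        qed
        obtain d where d': "NE a d" "d \<noteq> b"
        proof -
          have "a = d1 \<or> a = d2" using inter[OF ab d(1)] d by auto
          then show thesis
          proof
            assume "a = d1" then show thesis using that d by auto
          next
            assume "a = d2" then show thesis using that d NEsym by auto
          qed
        qed
        have "c = d" using inter[OF c'(1) d'(1)] c' d' ab by (auto simp: NE_def)
        then have ac: "NE a c" using d' by simp
        have dist: "a \<noteq> b" "b \<noteq> c" "a \<noteq> c" using ab c' ac by (auto simp: NE_def)
        define Q where "Q = {a, b, c}"
        have "fullQ V E Q" unfolding fullQ_def
        proof (intro conjI ballI impI)
          show "Q \<subseteq> V" using ab c' by (auto simp: Q_def NE_def)
          show "card Q = 3" using dist by (simp add: Q_def)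
        next
          fix u v assume uv: "u \<in> V" "v \<in> V" "u \<noteq> v" "\<not> (u \<in> Q \<and> v \<in> Q)"
          show "{u, v} \<in> E"
          proof (rule ccontr)
            assume "{u, v} \<notin> E"
            then have uvN: "NE u v" using uv by (simp add: NE_def)
            have i1: "u = a \<or> u = b \<or> v = a \<or> v = b" using inter[OF uvN ab] .
            have i2: "u = b \<or> u = c \<or> v = b \<or> v = c" using inter[OF uvN c'(1)] .
            have i3: "u = a \<or> u = c \<or> v = a \<or> v = c" using inter[OF uvN ac] .
            show False using i1 i2 i3 uv(3,4) dist unfolding Q_def by auto
          qed
        qed
        then show ?thesis by blast
      qed
    qed
  qed
qed

lemma KE_mem: "{i, j} \<in> K_plus_eps3_E n \<longleftrightarrow> i < n \<and> j < n \<and> i \<noteq> j \<and> (i < n - 3 \<or> j < n - 3)"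
  unfolding K_plus_eps3_E_def by (auto simp: doubleton_eq_iff)

lemma edge_in_V:
  assumes "simple_graph V E" "{u, v} \<in> E" shows "u \<in> V" "v \<in> V" "u \<noteq> v"
proof -
  obtain a b where "{u, v} = {a, b}" "a \<noteq> b" "a \<in> V" "b \<in> V"
    using assms unfolding simple_graph_def by blast
  then show "u \<in> V" "v \<in> V" "u \<noteq> v" by (auto simp: doubleton_eq_iff)
qed

lemma iso_exact:
  assumes sg: "simple_graph V E" and cV: "card V = n" and n3: "n > 3"
  shows "graph_iso V E (K_plus_eps3_V n) (K_plus_eps3_E n) \<longleftrightarrow> (\<exists>Q. exactQ V E Q)"
proof
  assume "graph_iso V E (K_plus_eps3_V n) (K_plus_eps3_E n)"
  then obtain \<phi> where bij: "bij_betw \<phi> V {0..<n}"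
    and cond: "\<forall>u\<in>V. \<forall>v\<in>V. {u, v} \<in> E \<longleftrightarrow> {\<phi> u, \<phi> v} \<in> K_plus_eps3_E n"
    unfolding graph_iso_def K_plus_eps3_V_def by blast
  have inj: "inj_on \<phi> V" and img: "\<phi> ` V = {0..<n}" using bij by (auto simp: bij_betw_def)
  have lt: "\<phi> v < n" if "v \<in> V" for v using img that by auto
  define Q where "Q = {v \<in> V. n - 3 \<le> \<phi> v}"
  have "\<phi> ` Q = {n - 3..<n}"
  proof
    show "\<phi> ` Q \<subseteq> {n - 3..<n}" using lt by (auto simp: Q_def)
    show "{n - 3..<n} \<subseteq> \<phi> ` Q"
    proof
      fix i assume i: "i \<in> {n - 3..<n}"
      then have "i \<in> \<phi> ` V" using img by auto
      then obtain v where "v \<in> V" "i = \<phi> v" by blast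
      then show "i \<in> \<phi> ` Q" using i by (auto simp: Q_def)
    qed
  qed
  moreover have "inj_on \<phi> Q" using inj_on_subset[OF inj] by (auto simp: Q_def)
  ultimately have "card Q = card {n - 3..<n}" by (metis card_image)
  then have cQ: "card Q = 3" using n3 by simp
  have "exactQ V E Q" unfolding exactQ_def fullQ_def
  proof (intro conjI allI impI ballI)
    show "Q \<subseteq> V" by (auto simp: Q_def)
    show "card Q = 3" by (rule cQ)
  next
    fix u v assume uv: "u \<in> V" "v \<in> V" "u \<noteq> v" "\<not> (u \<in> Q \<and> v \<in> Q)"
    have "\<phi> u \<noteq> \<phi> v" using inj uv by (auto dest: inj_onD)
    then have "{\<phi> u, \<phi> v} \<in> K_plus_eps3_E n" using uv lt by (auto simp: KE_mem Q_def)
    then show "{u, v} \<in> E" using cond uv by blast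
  next
    fix u v assume e: "{u, v} \<in> E"
    have uv: "u \<in> V" "v \<in> V" using edge_in_V[OF sg e] by auto
    then have "{\<phi> u, \<phi> v} \<in> K_plus_eps3_E n" using cond e by blast
    then show "\<not> (u \<in> Q \<and> v \<in> Q)" by (auto simp: KE_mem Q_def)
  qed
  then show "\<exists>Q. exactQ V E Q" by blast
next
  assume "\<exists>Q. exactQ V E Q"
  then obtain Q where eq: "exactQ V E Q" by blast
  have fq: "fullQ V E Q" and noQ: "\<forall>u v. {u, v} \<in> E \<longrightarrow> \<not> (u \<in> Q \<and> v \<in> Q)"
    using eq unfolding exactQ_def by simp_all
  have QV: "Q \<subseteq> V" and cQ: "card Q = 3"
    and full: "\<forall>u\<in>V. \<forall>v\<in>V. u \<noteq> v \<longrightarrow> \<not> (u \<in> Q \<and> v \<in> Q) \<longrightarrow> {u, v} \<in> E"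
    using fq unfolding fullQ_def by simp_all
  have finV: "finite V" using sg by (simp add: simple_graph_def)
  have finQ: "finite Q" using finV QV finite_subset by blast
  have cR: "card (V - Q) = n - 3" using cV cQ QV finV by (simp add: card_Diff_subset finQ)
  obtain h1 where h1: "bij_betw h1 (V - Q) {0..<n - 3}"
    using finite_same_card_bij[of "V - Q" "{0..<n - 3}"] finV cR by auto
  obtain h2 where h2: "bij_betw h2 Q {n - 3..<n}"
    using finite_same_card_bij[of Q "{n - 3..<n}"] finQ cQ n3 by auto
  define \<phi> where "\<phi> v = (if v \<in> Q then h2 v else h1 v)" for v
  have "bij_betw \<phi> (V - Q) {0..<n - 3} = bij_betw h1 (V - Q) {0..<n - 3}"
    by (rule bij_betw_cong) (simp add: \<phi>_def)
  then have b1: "bij_betw \<phi> (V - Q) {0..<n - 3}" using h1 by simp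
  have "bij_betw \<phi> Q {n - 3..<n} = bij_betw h2 Q {n - 3..<n}"
    by (rule bij_betw_cong) (simp add: \<phi>_def)
  then have b2: "bij_betw \<phi> Q {n - 3..<n}" using h2 by simp
  have "bij_betw \<phi> ((V - Q) \<union> Q) ({0..<n - 3} \<union> {n - 3..<n})"
    by (rule bij_betw_combine[OF b1 b2]) auto
  moreover have "(V - Q) \<union> Q = V" using QV by auto
  moreover have "{0..<n - 3} \<union> {n - 3..<n} = {0..<n}" by auto
  ultimately have bij: "bij_betw \<phi> V {0..<n}" by simp
  have inj: "inj_on \<phi> V" using bij by (simp add: bij_betw_def)
  have lt: "\<phi> v < n" if "v \<in> V" for v
  proof -
    have "\<phi> v \<in> \<phi> ` V" using that by (rule imageI)
    then show ?thesis using bij unfolding bij_betw_def by simp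
  qed
  have lowQ: "\<phi> v < n - 3 \<longleftrightarrow> v \<notin> Q" if "v \<in> V" for v
  proof
    assume a: "\<phi> v < n - 3"
    show "v \<notin> Q"
    proof
      assume "v \<in> Q"
      then have "\<phi> v \<in> \<phi> ` Q" by (rule imageI)
      then show False using b2 a unfolding bij_betw_def by simp
    qed
  next
    assume "v \<notin> Q"
    then have "v \<in> V - Q" using that by simp
    then have "\<phi> v \<in> \<phi> ` (V - Q)" by (rule imageI)
    then show "\<phi> v < n - 3" using b1 unfolding bij_betw_def by simp
  qed
  show "graph_iso V E (K_plus_eps3_V n) (K_plus_eps3_E n)"
    unfolding graph_iso_def K_plus_eps3_V_def
  proof (intro exI[of _ \<phi>] conjI ballI)
    show "bij_betw \<phi> V {0..<n}" by (rule bij)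
  next
    fix u v assume uv: "u \<in> V" "v \<in> V"
    show "{u, v} \<in> E \<longleftrightarrow> {\<phi> u, \<phi> v} \<in> K_plus_eps3_E n"
    proof (cases "u = v")
      case True
      have "{u, v} \<notin> E" using edge_in_V(3)[OF sg] True by blast
      moreover have "{\<phi> u, \<phi> v} \<notin> K_plus_eps3_E n" using KE_mem[of "\<phi> u" "\<phi> v" n] True by simp
      ultimately show ?thesis by simp
    next
      case False
      have ne: "\<phi> u \<noteq> \<phi> v" using inj uv False by (auto dest: inj_onD)
      have "{u, v} \<in> E \<longleftrightarrow> \<not> (u \<in> Q \<and> v \<in> Q)"
      proof
        assume "{u, v} \<in> E" then show "\<not> (u \<in> Q \<and> v \<in> Q)" using noQ by blast
      next
        assume "\<not> (u \<in> Q \<and> v \<in> Q)" then show "{u, v} \<in> E" using full uv False by blast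
      qed
      also have "\<dots> \<longleftrightarrow> {\<phi> u, \<phi> v} \<in> K_plus_eps3_E n"
        using ne lt[OF uv(1)] lt[OF uv(2)] lowQ[OF uv(1)] lowQ[OF uv(2)] by (auto simp: KE_mem)
      finally show ?thesis .
    qed
  qed
qed

lemma other_two:
  assumes "card Q = 3" "u \<in> Q"
  shows "\<exists>y z. Q = {u, y, z} \<and> u \<noteq> y \<and> u \<noteq> z \<and> y \<noteq> z"
proof -
  obtain q1 q2 q3 where Qe: "Q = {q1, q2, q3}" and qd: "q1 \<noteq> q2" "q2 \<noteq> q3" "q1 \<noteq> q3"
    using assms(1) card_3_iff by metis
  then consider "u = q1" | "u = q2" | "u = q3" using assms(2) by blast
  then show ?thesis
  proof cases
    case 1 then show ?thesis using Qe qd by blast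
  next
    case 2 then show ?thesis using Qe qd by (intro exI[of _ q1] exI[of _ q3]) auto
  next
    case 3 then show ?thesis using Qe qd by (intro exI[of _ q1] exI[of _ q2]) auto
  qed
qed

theorem mainTheorem18:
  fixes V :: "'a set" and E :: "'a set set" and n :: nat
  assumes "n > 3" and "simple_graph V E" and "card V = n"
  shows "minor_minimal_sdim V E (n - 1) \<longleftrightarrow>
         graph_iso V E (K_plus_eps3_V n) (K_plus_eps3_E n)"
proof -
  note n3 = assms(1) and sg = assms(2) and cV = assms(3)
  have finV: "finite V" using sg by (simp add: simple_graph_def)
  have "E \<subseteq> Pow V"
  proof
    fix e assume "e \<in> E"
    then obtain a b where "e = {a, b}" "a \<in> V" "b \<in> V" using sg unfolding simple_graph_def by blast
    then show "e \<in> Pow V" by auto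
  qed
  then have finE: "finite E" using finV finite_subset by blast
  show ?thesis unfolding iso_exact[OF sg cV n3]
  proof
    assume mm: "minor_minimal_sdim V E (n - 1)"
    have sd: "sdim V E = n - 1" and pm: "\<And>V' E'. proper_minor (V', E') (V, E) \<Longrightarrow> sdim V' E' < n - 1"
      using mm unfolding minor_minimal_sdim_def by auto
    have noA: False if "a1 \<in> V" "b1 \<in> V" "a2 \<in> V" "b2 \<in> V"
        "a1 \<noteq> b1" "a1 \<noteq> a2" "a1 \<noteq> b2" "b1 \<noteq> a2" "b1 \<noteq> b2" "a2 \<noteq> b2"
        "{a1, b1} \<notin> E" "{a2, b2} \<notin> E" for a1 b1 a2 b2
      using caseA[OF sg cV n3 that] sd n3 by simp
    have noB: False if "s \<in> V" "x \<in> V" "y \<in> V" "z \<in> V"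
        "s \<noteq> x" "s \<noteq> y" "s \<noteq> z" "x \<noteq> y" "x \<noteq> z" "y \<noteq> z"
        "{s, x} \<notin> E" "{s, y} \<notin> E" "{s, z} \<notin> E" for s x y z
      using caseB[OF sg cV n3 that] sd n3 by simp
    have "\<exists>Q. fullQ V E Q"
    proof (rule combin[OF sg cV n3])
      show False if "a1 \<in> V" "b1 \<in> V" "a2 \<in> V" "b2 \<in> V"
        "a1 \<noteq> b1" "a1 \<noteq> a2" "a1 \<noteq> b2" "b1 \<noteq> a2" "b1 \<noteq> b2" "a2 \<noteq> b2"
        "{a1, b1} \<notin> E" "{a2, b2} \<notin> E" for a1 b1 a2 b2 using that by (rule noA)
      show False if "s \<in> V" "x \<in> V" "y \<in> V" "z \<in> V"
        "s \<noteq> x" "s \<noteq> y" "s \<noteq> z" "x \<noteq> y" "x \<noteq> z" "y \<noteq> z"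
        "{s, x} \<notin> E" "{s, y} \<notin> E" "{s, z} \<notin> E" for s x y z using that by (rule noB)
    qed
    then obtain Q where fq: "fullQ V E Q" by blast
    have QV: "Q \<subseteq> V" and cQ: "card Q = 3"
      and full: "\<forall>u\<in>V. \<forall>v\<in>V. u \<noteq> v \<longrightarrow> \<not> (u \<in> Q \<and> v \<in> Q) \<longrightarrow> {u, v} \<in> E"
      using fq unfolding fullQ_def by simp_all
    have "\<forall>u v. {u, v} \<in> E \<longrightarrow> \<not> (u \<in> Q \<and> v \<in> Q)"
    proof (intro allI impI notI)
      fix u v assume e: "{u, v} \<in> E" and uvQ: "u \<in> Q \<and> v \<in> Q"
      define E' where "E' = {e \<in> E. \<not> e \<subseteq> Q}"
      have "{u, v} \<notin> E'" using uvQ by (simp add: E'_def)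
      moreover have "E' \<subseteq> E" by (simp add: E'_def)
      ultimately have sub: "E' \<subset> E" using e by blast
      have pmE: "proper_minor (V, E') (V, E)" by (rule sub_proper_minor[OF finE sub])
      have sg': "simple_graph V E'" unfolding simple_graph_def
      proof (intro conjI ballI)
        show "finite V" by (rule finV)
        fix e assume "e \<in> E'"
        then have "e \<in> E" by (simp add: E'_def)
        then show "\<exists>u v. e = {u, v} \<and> u \<noteq> v \<and> u \<in> V \<and> v \<in> V"
          using sg unfolding simple_graph_def by blast
      qed
      have "fullQ V E' Q" unfolding fullQ_def
      proof (intro conjI ballI impI)
        show "Q \<subseteq> V" "card Q = 3" using QV cQ by auto
      next
        fix x y assume xy: "x \<in> V" "y \<in> V" "x \<noteq> y" "\<not> (x \<in> Q \<and> y \<in> Q)"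
        then have "{x, y} \<in> E" using full by blast
        then show "{x, y} \<in> E'" using xy(4) by (simp add: E'_def)
      qed
      then have "sdim V E' \<ge> n - 1" by (rule sdim_full_ge[OF sg' cV n3])
      then show False using pm[OF pmE] by simp
    qed
    then have "exactQ V E Q" using fq by (simp add: exactQ_def)
    then show "\<exists>Q. exactQ V E Q" by blast
  next
    assume "\<exists>Q. exactQ V E Q"
    then obtain Q where eq: "exactQ V E Q" by blast
    have fq: "fullQ V E Q" and noQ: "\<forall>u v. {u, v} \<in> E \<longrightarrow> \<not> (u \<in> Q \<and> v \<in> Q)"
      using eq unfolding exactQ_def by simp_all
    have QV: "Q \<subseteq> V" and cQ: "card Q = 3"
      using fq unfolding fullQ_def by simp_all
    show "minor_minimal_sdim V E (n - 1)" unfolding minor_minimal_sdim_def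
    proof (intro conjI allI impI)
      show "sdim V E = n - 1"
        using sdim_exact_le[OF sg cV n3 eq] sdim_full_ge[OF sg cV n3 fq] by simp
    next
      fix V' E' assume pmi: "proper_minor (V', E') (V, E)"
      have "mprop (V, E) (V', E')" using proper_minor_props[OF pmi] sg by simp
      then have sg': "simple_graph V' E'" and alt: "card V' < n \<or> (V' = V \<and> E' \<subset> E)"
        using cV by (simp_all add: mprop_def)
      have "sdim V' E' \<le> n - 2"
        using alt
      proof
        assume "card V' < n"
        then show ?thesis using small_sdim[OF sg' _ n3] by simp
      next
        assume "V' = V \<and> E' \<subset> E"
        then have VV: "V' = V" and sub: "E' \<subset> E" by auto
        have sgV: "simple_graph V E'" using sg' VV by simp
        obtain e where eE: "e \<in> E" "e \<notin> E'" using sub by blast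
        obtain u v where uv: "e = {u, v}" "u \<noteq> v" "u \<in> V" "v \<in> V"
          using sg eE(1) unfolding simple_graph_def by blast
        have nq: "\<not> (u \<in> Q \<and> v \<in> Q)" using noQ eE(1) uv(1) by blast
        have notE': "{a, b} \<notin> E'" if "a \<in> Q" "b \<in> Q" for a b
          using noQ that sub by blast
        have uvE': "{u, v} \<notin> E'" "{v, u} \<notin> E'" using eE uv by (auto simp: insert_commute)
        have "sdim V E' \<le> n - 2"
        proof (cases "u \<in> Q \<or> v \<in> Q")
          case False
          obtain q1 q2 q3 where Qe: "Q = {q1, q2, q3}" and qd: "q1 \<noteq> q2" "q2 \<noteq> q3" "q1 \<noteq> q3"
            using cQ card_3_iff by metis
          have qV: "q1 \<in> V" "q2 \<in> V" using QV Qe by auto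
          have "u \<noteq> q1" "u \<noteq> q2" "v \<noteq> q1" "v \<noteq> q2" using False Qe by auto
          then show ?thesis
            using caseA[OF sgV cV n3 uv(3,4) qV uv(2)] qd uvE' notE'[of q1 q2] Qe by auto
        next
          case True
          then consider "u \<in> Q" "v \<notin> Q" | "v \<in> Q" "u \<notin> Q" using nq by blast
          then show ?thesis
          proof cases
            case 1
            obtain y z where yz: "Q = {u, y, z}" "u \<noteq> y" "u \<noteq> z" "y \<noteq> z"
              using other_two[OF cQ 1(1)] by blast
            have yzV: "y \<in> V" "z \<in> V" using QV yz by auto
            have "v \<noteq> y" "v \<noteq> z" using 1 yz by auto
            then show ?thesis
              using caseB[OF sgV cV n3 uv(3,4) yzV] yz uv(2) uvE' notE'[of u y] notE'[of u z] by auto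
          next
            case 2
            obtain y z where yz: "Q = {v, y, z}" "v \<noteq> y" "v \<noteq> z" "y \<noteq> z"
              using other_two[OF cQ 2(1)] by blast
            have yzV: "y \<in> V" "z \<in> V" using QV yz by auto
            have "u \<noteq> y" "u \<noteq> z" using 2 yz by auto
            then show ?thesis
              using caseB[OF sgV cV n3 uv(4,3) yzV] yz uv(2) uvE' notE'[of v y] notE'[of v z] by auto
          qed
        qed
        then show ?thesis using VV by simp
      qed
      then show "sdim V' E' < n - 1" using n3 by simp
    qed
  qed
qed


end
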